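(* Let $\xi=(\omega,\gamma,\mu,c)$ be a normalized quasi-abelian 3-cocycle on a finite crossed module $(G,X,\partial)$, and let $R$ be a complete set of representatives of the orbits of $G$ on $X$. For $a\in R$ let $\phi_a(g,h)=\gamma_{g,h}(a)$ for $g,h\in\mathrm{Stab}_G(a)=\{g\in G\mid {}^ga=a\}$ (a 2-cocycle on $\mathrm{Stab}_G(a)$). Then the set of isomorphism classes of simple objects of $\mathcal{C}(\xi)^G$ is in bijection with the set of isomorphism classes of $$\Gamma=\{(a,V)\mid a\in R,\ V \text{ an irreducible module over } \mathbb{K}_{\phi_a}[\mathrm{Stab}_G(a)]\},$$ where $(a,V)$ and $(a',V')$ are isomorphic if $a=a'$ and $V\cong V'$.
   Context: $\mathbb{K}$ is an algebraically closed field of characteristic $0$. A module over the twisted group algebra $\mathbb{K}_{\phi}[H]$ (for a 2-cocycle $\phi$ on a finite group $H$) means, as used here, a finite-dimensional vector space $V$ with linear maps $v\mapsto t\triangleright v$ ($t\in H$) such that $st\triangleright v=\phi(s,t)\,(s\triangleright(t\triangleright v))$ and $e\triangleright v=v$. A finite crossed module is a triple $(G,X,\partial)$ with $G,X$ finite groups, $G$ acting on $X$ by automorphisms $(g,x)\mapsto {}^{g}x$, and $\partial:X\to G$ a homomorphism with ${}^{\partial(x)}x'=xx'x^{-1}$ and $\partial({}^gx)=g\partial(x)g^{-1}$. A quasi-abelian 3-cocycle on it is a quadruple $\xi=(\omega,\gamma,\mu,c)$ of functions $\omega:X^3\to\mathbb{K}^\times$, $(g,h,x)\mapsto\gamma_{g,h}(x)$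 on $G\times G\times X$, $(g,x,y)\mapsto\mu_g(x,y)$ on $G\times X\times X$, $c:X^2\to\mathbb{K}^\times$, such that for all $g,h,k\in G$, $w,x,y,z\in X$: (a) $\omega(x,y,z)\omega(w,xy,z)\omega(w,x,y)=\omega(w,x,yz)\omega(wx,y,z)$; (b) $\gamma_{h,k}(x)\gamma_{g,hk}(x)=\gamma_{gh,k}(x)\gamma_{g,h}({}^kx)$; (c) $\frac{\mu_g(y,z)\mu_g(x,yz)}{\mu_g(xy,z)\mu_g(x,y)}=\frac{\omega({}^gx,{}^gy,{}^gz)}{\omega(x,y,z)}$; (d) $\frac{\gamma_{g,h}(x)\gamma_{g,h}(y)}{\gamma_{g,h}(xy)}=\frac{\mu_g({}^hx,{}^hy)\mu_h(x,y)}{\mu_{gh}(x,y)}$; (e) $\frac{c({}^gx,{}^gy)}{c(x,y)}=\frac{\mu_g(xyx^{-1},x)}{\mu_g(x,y)}\cdot\frac{\gamma_{g\partial(x)g^{-1},g}(y)}{\gamma_{g,\partial(x)}(y)}$; (f) $c(xy,z)=\frac{\omega(x,y,z)\,\omega((xy)z(xy)^{-1},x,y)}{\omega(x,yzy^{-1},y)\,\gamma_{\partial(x),\partial(y)}(z)}\,c(x,yzy^{-1})\,c(y,z)$; (g) $c(x,yz)=\frac{\omega(xyx^{-1},x,z)}{\omega(x,y,z)\,\omega(xyx^{-1},xzx^{-1},x)\,\mu_{\partial(x)}(y,z)}\,c(x,y)\,c(x,z)$. It is normalized if $\omega(x,y,z)=1$ whenever one of $x,y,z$ is $e$, $\gamma_{g,h}(x)=1$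 whenever one of $g,h,x$ is $e$, $\mu_g(x,y)=1$ whenever one of $g,x,y$ is $e$, and $c(x,y)=1$ whenever $x$ or $y$ is $e$. $\mathcal{C}(\xi)$ denotes the fusion category $\mathrm{Vec}_X^\omega$ of finite-dimensional $X$-graded vector spaces (tensor product $\otimes_\mathbb{K}$ with degrees multiplied, associativity $(u\otimes v)\otimes w\mapsto\omega(x,y,z)u\otimes(v\otimes w)$) with: the $G$-grading with $\mathcal{C}_g$ the objects supported on $\partial^{-1}(g)$; functors $T_g$ sending homogeneous $V$ of degree $x$ to the same space in degree ${}^gx$; and for homogeneous $V,W$ of degrees $x,y$ the isomorphisms $\tilde\gamma_{g,h}(V)=\gamma_{g,h}(x)\mathrm{id}_V:T_{gh}(V)\to T_gT_h(V)$, $\tilde\mu_g(V,W)=\mu_g(x,y)\mathrm{id}:T_g(V\otimes W)\to T_gV\otimes T_gW$, $\tilde c(V,W)=c(x,y)\tau_{V,W}:V\otimes W\to T_{\partial(x)}(W)\otimes V$ ($\tau$ the flip). The equivariantization $\mathcal{C}(\xi)^G$ is the braided fusion category of pairs $(V,\{u_g\}_{g\in G})$, $u_g:T_g(V)\to V$ isomorphisms with $u_{gh}=u_g\circ T_g(u_h)\circ\tilde\gamma_{g,h}(V)$; morphisms are morphisms of $\mathrm{Vec}_X^\omega$ commuting with the $u_g$; tensor product $(V\otimes V',\{(u_g\otimes u'_g)\circ\tilde\mu_g(V,V')\})$; braiding given on $V_g\otimes V'$ ($V_g$ the component of $V$ in $\mathcal{C}_g$) by $(u'_g\otimes\mathrm{id})\circ\tilde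 c(V_g,V')$. *)

theory Defs
  imports "Jordan_Normal_Form.Matrix" "HOL-Algebra.Group"
    "HOL-Computational_Algebra.Polynomial"
begin

section \<open>Ground field\<close>

definition alg_closed :: "'k::field itself \<Rightarrow> bool" where
  "alg_closed _ \<longleftrightarrow> (\<forall>p :: 'k poly. degree p \<ge> 1 \<longrightarrow> (\<exists>z. poly p z = 0))"

section \<open>Finite crossed modules\<close>

text \<open>act g x is the action g . x of G on X; bd is the boundary map.\<close>

definition crossed_module ::
  "('g, 'a) monoid_scheme \<Rightarrow> ('x, 'b) monoid_scheme \<Rightarrow> ('g \<Rightarrow> 'x \<Rightarrow> 'x) \<Rightarrow> ('x \<Rightarrow> 'g) \<Rightarrow> bool" where
  "crossed_module G X act bd \<longleftrightarrow>
     group G \<and> group X \<and> finite (carrier G) \<and> finite (carrier X) \<and>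
     (\<forall>g\<in>carrier G. act g \<in> hom X X \<and> bij_betw (act g) (carrier X) (carrier X)) \<and>
     (\<forall>x\<in>carrier X. act \<one>\<^bsub>G\<^esub> x = x) \<and>
     (\<forall>g\<in>carrier G. \<forall>h\<in>carrier G. \<forall>x\<in>carrier X.
        act (g \<otimes>\<^bsub>G\<^esub> h) x = act g (act h x)) \<and>
     bd \<in> hom X G \<and>
     (\<forall>x\<in>carrier X. \<forall>x'\<in>carrier X.
        act (bd x) x' = x \<otimes>\<^bsub>X\<^esub> x' \<otimes>\<^bsub>X\<^esub> inv\<^bsub>X\<^esub> x) \<and>
     (\<forall>g\<in>carrier G. \<forall>x\<in>carrier X.
        bd (act g x) = g \<otimes>\<^bsub>G\<^esub> bd x \<otimes>\<^bsub>G\<^esub> inv\<^bsub>G\<^esub> g)"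

section \<open>Quasi-abelian 3-cocycles\<close>

definition quasi_abelian_3cocycle ::
  "('g, 'a) monoid_scheme \<Rightarrow> ('x, 'b) monoid_scheme \<Rightarrow> ('g \<Rightarrow> 'x \<Rightarrow> 'x) \<Rightarrow> ('x \<Rightarrow> 'g) \<Rightarrow>
   ('x \<Rightarrow> 'x \<Rightarrow> 'x \<Rightarrow> 'k::field) \<Rightarrow> ('g \<Rightarrow> 'g \<Rightarrow> 'x \<Rightarrow> 'k) \<Rightarrow>
   ('g \<Rightarrow> 'x \<Rightarrow> 'x \<Rightarrow> 'k) \<Rightarrow> ('x \<Rightarrow> 'x \<Rightarrow> 'k) \<Rightarrow> bool" where
  "quasi_abelian_3cocycle G X act bd \<omega> \<gamma> \<mu> c \<longleftrightarrow>
   (let mG = (\<lambda>a b. a \<otimes>\<^bsub>G\<^esub> b); mX = (\<lambda>a b. a \<otimes>\<^bsub>X\<^esub> b);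
        iG = (\<lambda>a. inv\<^bsub>G\<^esub> a); iX = (\<lambda>a. inv\<^bsub>X\<^esub> a) in
   \<comment> \<open>values lie in the multiplicative group of the field\<close>
   (\<forall>x\<in>carrier X. \<forall>y\<in>carrier X. \<forall>z\<in>carrier X. \<omega> x y z \<noteq> 0) \<and>
   (\<forall>g\<in>carrier G. \<forall>h\<in>carrier G. \<forall>x\<in>carrier X. \<gamma> g h x \<noteq> 0) \<and>
   (\<forall>g\<in>carrier G. \<forall>x\<in>carrier X. \<forall>y\<in>carrier X. \<mu> g x y \<noteq> 0) \<and>
   (\<forall>x\<in>carrier X. \<forall>y\<in>carrier X. c x y \<noteq> 0) \<and>
   \<comment> \<open>(a)\<close>
   (\<forall>w\<in>carrier X. \<forall>x\<in>carrier X. \<forall>y\<in>carrier X. \<forall>z\<in>carrier X.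
      \<omega> x y z * \<omega> w (mX x y) z * \<omega> w x y = \<omega> w x (mX y z) * \<omega> (mX w x) y z) \<and>
   \<comment> \<open>(b)\<close>
   (\<forall>g\<in>carrier G. \<forall>h\<in>carrier G. \<forall>k\<in>carrier G. \<forall>x\<in>carrier X.
      \<gamma> h k x * \<gamma> g (mG h k) x = \<gamma> (mG g h) k x * \<gamma> g h (act k x)) \<and>
   \<comment> \<open>(c)\<close>
   (\<forall>g\<in>carrier G. \<forall>x\<in>carrier X. \<forall>y\<in>carrier X. \<forall>z\<in>carrier X.
      (\<mu> g y z * \<mu> g x (mX y z)) / (\<mu> g (mX x y) z * \<mu> g x y)
        = \<omega> (act g x) (act g y) (act g z) / \<omega> x y z) \<and>
   \<comment> \<open>(d)\<close>
   (\<forall>g\<in>carrier G. \<forall>h\<in>carrier G. \<forall>x\<in>carrier X. \<forall>y\<in>carrier X.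
      (\<gamma> g h x * \<gamma> g h y) / \<gamma> g h (mX x y)
        = (\<mu> g (act h x) (act h y) * \<mu> h x y) / \<mu> (mG g h) x y) \<and>
   \<comment> \<open>(e)\<close>
   (\<forall>g\<in>carrier G. \<forall>x\<in>carrier X. \<forall>y\<in>carrier X.
      c (act g x) (act g y) / c x y
        = (\<mu> g (mX (mX x y) (iX x)) x / \<mu> g x y) *
          (\<gamma> (mG (mG g (bd x)) (iG g)) g y / \<gamma> g (bd x) y)) \<and>
   \<comment> \<open>(f)\<close>
   (\<forall>x\<in>carrier X. \<forall>y\<in>carrier X. \<forall>z\<in>carrier X.
      c (mX x y) z
        = (\<omega> x y z * \<omega> (mX (mX (mX x y) z) (iX (mX x y))) x y)
          / (\<omega> x (mX (mX y z) (iX y)) y * \<gamma> (bd x) (bd y) z)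
          * c x (mX (mX y z) (iX y)) * c y z) \<and>
   \<comment> \<open>(g)\<close>
   (\<forall>x\<in>carrier X. \<forall>y\<in>carrier X. \<forall>z\<in>carrier X.
      c x (mX y z)
        = \<omega> (mX (mX x y) (iX x)) x z
          / (\<omega> x y z * \<omega> (mX (mX x y) (iX x)) (mX (mX x z) (iX x)) x * \<mu> (bd x) y z)
          * c x y * c x z))"

definition normalized_cocycle ::
  "('g, 'a) monoid_scheme \<Rightarrow> ('x, 'b) monoid_scheme \<Rightarrow>
   ('x \<Rightarrow> 'x \<Rightarrow> 'x \<Rightarrow> 'k::field) \<Rightarrow> ('g \<Rightarrow> 'g \<Rightarrow> 'x \<Rightarrow> 'k) \<Rightarrow>
   ('g \<Rightarrow> 'x \<Rightarrow> 'x \<Rightarrow> 'k) \<Rightarrow> ('x \<Rightarrow> 'x \<Rightarrow> 'k) \<Rightarrow> bool" where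
  "normalized_cocycle G X \<omega> \<gamma> \<mu> c \<longleftrightarrow>
   (\<forall>x\<in>carrier X. \<forall>y\<in>carrier X. \<forall>z\<in>carrier X.
      (x = \<one>\<^bsub>X\<^esub> \<or> y = \<one>\<^bsub>X\<^esub> \<or> z = \<one>\<^bsub>X\<^esub>) \<longrightarrow> \<omega> x y z = 1) \<and>
   (\<forall>g\<in>carrier G. \<forall>h\<in>carrier G. \<forall>x\<in>carrier X.
      (g = \<one>\<^bsub>G\<^esub> \<or> h = \<one>\<^bsub>G\<^esub> \<or> x = \<one>\<^bsub>X\<^esub>) \<longrightarrow> \<gamma> g h x = 1) \<and>
   (\<forall>g\<in>carrier G. \<forall>x\<in>carrier X. \<forall>y\<in>carrier X.
      (g = \<one>\<^bsub>G\<^esub> \<or> x = \<one>\<^bsub>X\<^esub> \<or> y = \<one>\<^bsub>X\<^esub>) \<longrightarrow> \<mu> g x y = 1) \<and>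
   (\<forall>x\<in>carrier X. \<forall>y\<in>carrier X.
      (x = \<one>\<^bsub>X\<^esub> \<or> y = \<one>\<^bsub>X\<^esub>) \<longrightarrow> c x y = 1)"

section \<open>The equivariantization C(xi)^G: objects, morphisms, simple objects\<close>

text \<open>An X-graded finite-dimensional vector space V is given by the dimensions d x of
  its homogeneous components V_x = K^(d x).  The isomorphism u_g : T_g(V) \<rightarrow> V is given by
  its components u g x : V_x \<rightarrow> V_(g.x) (as matrices).  The condition
  u_gh = u_g \<circ> T_g(u_h) \<circ> \<gamma>~_(g,h)(V) reads componentwise
  u (gh) x = \<gamma> g h x \<cdot> (u g (h.x) * u h x).\<close>

type_synonym ('x, 'g, 'k) eq_obj = "('x \<Rightarrow> nat) \<times> ('g \<Rightarrow> 'x \<Rightarrow> 'k mat)"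

definition eq_object ::
  "('g, 'a) monoid_scheme \<Rightarrow> ('x, 'b) monoid_scheme \<Rightarrow> ('g \<Rightarrow> 'x \<Rightarrow> 'x) \<Rightarrow>
   ('g \<Rightarrow> 'g \<Rightarrow> 'x \<Rightarrow> 'k::field) \<Rightarrow> ('x, 'g, 'k) eq_obj \<Rightarrow> bool" where
  "eq_object G X act \<gamma> V \<longleftrightarrow>
   (let d = fst V; u = snd V in
   (\<forall>g\<in>carrier G. \<forall>x\<in>carrier X.
      u g x \<in> carrier_mat (d (act g x)) (d x) \<and>
      (\<exists>v. v \<in> carrier_mat (d x) (d (act g x)) \<and>
           v * u g x = 1\<^sub>m (d x) \<and> u g x * v = 1\<^sub>m (d (act g x)))) \<and>
   (\<forall>g\<in>carrier G. \<forall>h\<in>carrier G. \<forall>x\<in>carrier X.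
      u (g \<otimes>\<^bsub>G\<^esub> h) x = \<gamma> g h x \<cdot>\<^sub>m (u g (act h x) * u h x)))"

definition eq_morphism ::
  "('g, 'a) monoid_scheme \<Rightarrow> ('x, 'b) monoid_scheme \<Rightarrow> ('g \<Rightarrow> 'x \<Rightarrow> 'x) \<Rightarrow>
   ('x \<Rightarrow> 'k::field mat) \<Rightarrow> ('x, 'g, 'k) eq_obj \<Rightarrow> ('x, 'g, 'k) eq_obj \<Rightarrow> bool" where
  "eq_morphism G X act f V W \<longleftrightarrow>
   (\<forall>x\<in>carrier X. f x \<in> carrier_mat (fst W x) (fst V x)) \<and>
   (\<forall>g\<in>carrier G. \<forall>x\<in>carrier X. f (act g x) * snd V g x = snd W g x * f x)"

definition eq_isomorphic ::
  "('g, 'a) monoid_scheme \<Rightarrow> ('x, 'b) monoid_scheme \<Rightarrow> ('g \<Rightarrow> 'x \<Rightarrow> 'x) \<Rightarrow>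
   ('x, 'g, 'k::field) eq_obj \<Rightarrow> ('x, 'g, 'k) eq_obj \<Rightarrow> bool" where
  "eq_isomorphic G X act V W \<longleftrightarrow>
   (\<exists>f f'. eq_morphism G X act f V W \<and> eq_morphism G X act f' W V \<and>
      (\<forall>x\<in>carrier X. f' x * f x = 1\<^sub>m (fst V x) \<and> f x * f' x = 1\<^sub>m (fst W x)))"

text \<open>Subobjects of (V,u): X-graded subspaces W_x \<subseteq> V_x stable under all u_g.\<close>

definition lin_subspace :: "nat \<Rightarrow> 'k::field vec set \<Rightarrow> bool" where
  "lin_subspace n S \<longleftrightarrow> S \<subseteq> carrier_vec n \<and> 0\<^sub>v n \<in> S \<and>
     (\<forall>v\<in>S. \<forall>w\<in>S. v + w \<in> S) \<and> (\<forall>a. \<forall>v\<in>S. a \<cdot>\<^sub>v v \<in> S)"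

definition eq_subobject ::
  "('g, 'a) monoid_scheme \<Rightarrow> ('x, 'b) monoid_scheme \<Rightarrow> ('g \<Rightarrow> 'x \<Rightarrow> 'x) \<Rightarrow>
   ('x, 'g, 'k::field) eq_obj \<Rightarrow> ('x \<Rightarrow> 'k vec set) \<Rightarrow> bool" where
  "eq_subobject G X act V W \<longleftrightarrow>
   (\<forall>x\<in>carrier X. lin_subspace (fst V x) (W x)) \<and>
   (\<forall>g\<in>carrier G. \<forall>x\<in>carrier X. \<forall>w\<in>W x. snd V g x *\<^sub>v w \<in> W (act g x))"

definition eq_simple ::
  "('g, 'a) monoid_scheme \<Rightarrow> ('x, 'b) monoid_scheme \<Rightarrow> ('g \<Rightarrow> 'x \<Rightarrow> 'x) \<Rightarrow>
   ('g \<Rightarrow> 'g \<Rightarrow> 'x \<Rightarrow> 'k::field) \<Rightarrow> ('x, 'g, 'k) eq_obj \<Rightarrow> bool" where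
  "eq_simple G X act \<gamma> V \<longleftrightarrow>
   eq_object G X act \<gamma> V \<and>
   (\<exists>x\<in>carrier X. fst V x \<noteq> 0) \<and>
   (\<forall>W. eq_subobject G X act V W \<longrightarrow>
      (\<forall>x\<in>carrier X. W x = {0\<^sub>v (fst V x)}) \<or> (\<forall>x\<in>carrier X. W x = carrier_vec (fst V x)))"

definition simple_classes ::
  "('g, 'a) monoid_scheme \<Rightarrow> ('x, 'b) monoid_scheme \<Rightarrow> ('g \<Rightarrow> 'x \<Rightarrow> 'x) \<Rightarrow>
   ('g \<Rightarrow> 'g \<Rightarrow> 'x \<Rightarrow> 'k::field) \<Rightarrow> ('x, 'g, 'k) eq_obj set set" where
  "simple_classes G X act \<gamma> =
     {V. eq_simple G X act \<gamma> V} //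
     {(V, W). eq_simple G X act \<gamma> V \<and> eq_simple G X act \<gamma> W \<and> eq_isomorphic G X act V W}"

section \<open>Modules over twisted group algebras\<close>

text \<open>A module over K_phi[H] of dimension n: matrices rho t (t \<in> H) with
  rho (s t) = phi s t \<cdot> rho s * rho t and rho e = id.\<close>

definition tw_module ::
  "('g, 'a) monoid_scheme \<Rightarrow> 'g set \<Rightarrow> ('g \<Rightarrow> 'g \<Rightarrow> 'k::field) \<Rightarrow> nat \<Rightarrow> ('g \<Rightarrow> 'k mat) \<Rightarrow> bool" where
  "tw_module G H \<phi> n \<rho> \<longleftrightarrow>
   (\<forall>t\<in>H. \<rho> t \<in> carrier_mat n n) \<and>
   (\<forall>s\<in>H. \<forall>t\<in>H. \<rho> (s \<otimes>\<^bsub>G\<^esub> t) = \<phi> s t \<cdot>\<^sub>m (\<rho> s * \<rho> t)) \<and>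
   \<rho> \<one>\<^bsub>G\<^esub> = 1\<^sub>m n"

definition tw_irreducible ::
  "('g, 'a) monoid_scheme \<Rightarrow> 'g set \<Rightarrow> ('g \<Rightarrow> 'g \<Rightarrow> 'k::field) \<Rightarrow> nat \<Rightarrow> ('g \<Rightarrow> 'k mat) \<Rightarrow> bool" where
  "tw_irreducible G H \<phi> n \<rho> \<longleftrightarrow>
   tw_module G H \<phi> n \<rho> \<and> n \<noteq> 0 \<and>
   (\<forall>S. lin_subspace n S \<and> (\<forall>t\<in>H. \<forall>v\<in>S. \<rho> t *\<^sub>v v \<in> S) \<longrightarrow>
      S = {0\<^sub>v n} \<or> S = carrier_vec n)"

definition tw_isomorphic ::
  "'g set \<Rightarrow> nat \<Rightarrow> ('g \<Rightarrow> 'k::field mat) \<Rightarrow> nat \<Rightarrow> ('g \<Rightarrow> 'k mat) \<Rightarrow> bool" where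
  "tw_isomorphic H n \<rho> n' \<rho>' \<longleftrightarrow>
   (\<exists>P Q. P \<in> carrier_mat n' n \<and> Q \<in> carrier_mat n n' \<and>
      Q * P = 1\<^sub>m n \<and> P * Q = 1\<^sub>m n' \<and> (\<forall>t\<in>H. P * \<rho> t = \<rho>' t * P))"

definition stabilizer ::
  "('g, 'a) monoid_scheme \<Rightarrow> ('g \<Rightarrow> 'x \<Rightarrow> 'x) \<Rightarrow> 'x \<Rightarrow> 'g set" where
  "stabilizer G act a = {g \<in> carrier G. act g a = a}"

definition orbit_representatives ::
  "('g, 'a) monoid_scheme \<Rightarrow> ('x, 'b) monoid_scheme \<Rightarrow> ('g \<Rightarrow> 'x \<Rightarrow> 'x) \<Rightarrow> 'x set \<Rightarrow> bool" where
  "orbit_representatives G X act R \<longleftrightarrow>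
   R \<subseteq> carrier X \<and>
   (\<forall>x\<in>carrier X. \<exists>a\<in>R. \<exists>g\<in>carrier G. act g a = x) \<and>
   (\<forall>a\<in>R. \<forall>b\<in>R. (\<exists>g\<in>carrier G. act g a = b) \<longrightarrow> a = b)"

text \<open>Gamma = {(a, V) | a \<in> R, V irreducible over K_(phi_a)[Stab_G(a)]},
  phi_a g h = \<gamma> g h a; a module V is encoded as (n, rho).\<close>

definition Gamma_set ::
  "('g, 'a) monoid_scheme \<Rightarrow> ('g \<Rightarrow> 'x \<Rightarrow> 'x) \<Rightarrow> ('g \<Rightarrow> 'g \<Rightarrow> 'x \<Rightarrow> 'k::field) \<Rightarrow> 'x set \<Rightarrow>
   ('x \<times> nat \<times> ('g \<Rightarrow> 'k mat)) set" where
  "Gamma_set G act \<gamma> R =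
     {(a, n, \<rho>). a \<in> R \<and> tw_irreducible G (stabilizer G act a) (\<lambda>g h. \<gamma> g h a) n \<rho>}"

definition Gamma_classes ::
  "('g, 'a) monoid_scheme \<Rightarrow> ('g \<Rightarrow> 'x \<Rightarrow> 'x) \<Rightarrow> ('g \<Rightarrow> 'g \<Rightarrow> 'x \<Rightarrow> 'k::field) \<Rightarrow> 'x set \<Rightarrow>
   ('x \<times> nat \<times> ('g \<Rightarrow> 'k mat)) set set" where
  "Gamma_classes G act \<gamma> R =
     Gamma_set G act \<gamma> R //
     {((a, n, \<rho>), (a', n', \<rho>')).
        (a, n, \<rho>) \<in> Gamma_set G act \<gamma> R \<and> (a', n', \<rho>') \<in> Gamma_set G act \<gamma> R \<and>
        a = a' \<and> tw_isomorphic (stabilizer G act a) n \<rho> n' \<rho>'}"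

end

theory Submission
  imports Defs "Jordan_Normal_Form.Determinant"
begin



declare vec_of_dim_0[simp del]

lemma smult_smult_mat': "a \<cdot>\<^sub>m (b \<cdot>\<^sub>m (A::'k::field mat)) = (a*b) \<cdot>\<^sub>m A"
  by (rule eq_matI) auto

lemma smult_one_mat': "(1::'k::field) \<cdot>\<^sub>m A = A"
  by (rule eq_matI) auto

lemma smult_mat_vec': assumes "(A::'k::field mat) \<in> carrier_mat nr nc" "v \<in> carrier_vec nc"
  shows "(k \<cdot>\<^sub>m A) *\<^sub>v v = k \<cdot>\<^sub>v (A *\<^sub>v v)"
  using assms by (intro eq_vecI) simp_all

lemma mat00_eq: "A \<in> carrier_mat 0 0 \<Longrightarrow> B \<in> carrier_mat 0 0 \<Longrightarrow> A = B"
  by (rule eq_matI) auto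

declare vec_of_dim_0[simp del]

lemma carrier_vec0: "carrier_vec 0 = {0\<^sub>v 0 :: 'a::zero vec}"
proof
  show "carrier_vec 0 \<subseteq> {0\<^sub>v 0 :: 'a vec}"
  proof
    fix v :: "'a vec" assume "v \<in> carrier_vec 0"
    hence d: "dim_vec v = 0" by (rule carrier_vecD)
    have "v = 0\<^sub>v 0" by (rule eq_vecI) (use d in auto)
    thus "v \<in> {0\<^sub>v 0 :: 'a vec}" by blast
  qed
  show "{0\<^sub>v 0 :: 'a vec} \<subseteq> carrier_vec 0" using zero_carrier_vec by blast
qed

lemma carrier_vec_single: "carrier_vec n = {0\<^sub>v n :: 'k::field vec} \<Longrightarrow> n = 0"
proof (rule ccontr)
  assume h: "carrier_vec n = {0\<^sub>v n :: 'k vec}" "n \<noteq> 0"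
  have u: "(unit_vec n 0 :: 'k vec) \<in> carrier_vec n" by simp
  have "unit_vec n 0 = (0\<^sub>v n :: 'k vec)" using u unfolding h(1) by simp
  hence "(unit_vec n 0 :: 'k vec) $ 0 = 0\<^sub>v n $ 0" by simp
  thus False using h(2) by simp
qed

lemma zero_inner_id: assumes "(A::'k::field mat) \<in> carrier_mat n 0" "B \<in> carrier_mat 0 n" "A * B = 1\<^sub>m n"
  shows "n = 0"
proof (rule ccontr)
  assume "n \<noteq> 0"
  have "(A*B) $$ (0,0) = 0" using assms(1,2) \<open>n\<noteq>0\<close> by (simp add: scalar_prod_def)
  moreover have "(1\<^sub>m n :: 'k mat) $$ (0,0) = 1" using \<open>n\<noteq>0\<close> by simp
  ultimately show False using assms(3) by simp
qed

lemma mat_vec_zero': "(A::'k::field mat) \<in> carrier_mat nr nc \<Longrightarrow> A *\<^sub>v 0\<^sub>v nc = 0\<^sub>v nr"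
  by (intro eq_vecI) simp_all

lemma right_inv_surj: assumes "(A::'k::field mat) \<in> carrier_mat m n" "B \<in> carrier_mat n m" "A * B = 1\<^sub>m m"
  "v \<in> carrier_vec m" shows "v = A *\<^sub>v (B *\<^sub>v v)"
proof -
  have "(A * B) *\<^sub>v v = A *\<^sub>v (B *\<^sub>v v)" using assms(1,2,4) by (rule assoc_mult_mat_vec)
  moreover have "(A * B) *\<^sub>v v = v" using assms(3,4) by simp
  ultimately show ?thesis by simp
qed

lemma left_inv_inj: assumes "(A::'k::field mat) \<in> carrier_mat m n" "B \<in> carrier_mat n m" "B * A = 1\<^sub>m n"
  "w \<in> carrier_vec n" "A *\<^sub>v w = 0\<^sub>v m" shows "w = 0\<^sub>v n"
proof -
  have "w = (B * A) *\<^sub>v w" using assms(3,4) by simp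
  also have "\<dots> = B *\<^sub>v (A *\<^sub>v w)" using assms(2,1,4) by (rule assoc_mult_mat_vec)
  also have "\<dots> = 0\<^sub>v n" using assms(5) mat_vec_zero'[OF assms(2)] by simp
  finally show ?thesis .
qed




lemma field_aux:
  fixes P H M D F N E K Q C :: "'k::field"
  assumes h1: "P*H = M*D" and h2: "F*N = M*E" and h3: "K*N = Q*C"
    and nz: "Q \<noteq> 0" "E \<noteq> 0" "K \<noteq> 0"
  shows "P/Q*H = C*(D/E)*(F/K)"
proof -
  have "P*H*E*K = (M*D)*E*K" using h1 by simp
  also have "\<dots> = D*K*(M*E)" by (simp add: mult_ac)
  also have "\<dots> = D*K*(F*N)" using h2 by simp
  also have "\<dots> = D*F*(K*N)" by (simp add: mult_ac)
  also have "\<dots> = D*F*(Q*C)" using h3 by simp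
  finally have e: "P*H*E*K = D*F*(Q*C)" .
  have "P/Q*H = (P*H*E*K)/(Q*E*K)" using nz by (simp add: field_simps)
  also have "\<dots> = C*(D/E)*(F/K)" unfolding e using nz by (simp add: field_simps)
  finally show ?thesis .
qed

locale ctx = G: group G for G :: "('g,'a) monoid_scheme" +
  fixes X :: "('x,'b) monoid_scheme" and act :: "'g \<Rightarrow> 'x \<Rightarrow> 'x"
    and \<gamma> :: "'g \<Rightarrow> 'g \<Rightarrow> 'x \<Rightarrow> 'k::field"
  assumes act_cl: "\<lbrakk>g \<in> carrier G; x \<in> carrier X\<rbrakk> \<Longrightarrow> act g x \<in> carrier X"
    and act_one: "x \<in> carrier X \<Longrightarrow> act \<one>\<^bsub>G\<^esub> x = x"
    and act_mult: "\<lbrakk>g \<in> carrier G; h \<in> carrier G; x \<in> carrier X\<rbrakk> \<Longrightarrow>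
        act (g \<otimes>\<^bsub>G\<^esub> h) x = act g (act h x)"
    and gam_nz: "\<lbrakk>g \<in> carrier G; h \<in> carrier G; x \<in> carrier X\<rbrakk> \<Longrightarrow> \<gamma> g h x \<noteq> 0"
    and gam_coc: "\<lbrakk>g \<in> carrier G; h \<in> carrier G; k \<in> carrier G; x \<in> carrier X\<rbrakk> \<Longrightarrow>
        \<gamma> h k x * \<gamma> g (h \<otimes>\<^bsub>G\<^esub> k) x = \<gamma> (g \<otimes>\<^bsub>G\<^esub> h) k x * \<gamma> g h (act k x)"
    and gam_l1: "\<lbrakk>h \<in> carrier G; x \<in> carrier X\<rbrakk> \<Longrightarrow> \<gamma> \<one>\<^bsub>G\<^esub> h x = 1"
    and gam_r1: "\<lbrakk>g \<in> carrier G; x \<in> carrier X\<rbrakk> \<Longrightarrow> \<gamma> g \<one>\<^bsub>G\<^esub> x = 1"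
begin

definition orb where "orb a = {act g a | g. g \<in> carrier G}"
definition rep where "rep a x = (if x = a then \<one>\<^bsub>G\<^esub> else (SOME g. g \<in> carrier G \<and> act g a = x))"
definition hh where "hh a g x = inv\<^bsub>G\<^esub> (rep a (act g x)) \<otimes>\<^bsub>G\<^esub> g \<otimes>\<^bsub>G\<^esub> rep a x"
definition lam where "lam a g x = \<gamma> (rep a (act g x)) (hh a g x) a / \<gamma> g (rep a x) a"
definition Ind :: "'x \<Rightarrow> nat \<Rightarrow> ('g \<Rightarrow> 'k mat) \<Rightarrow> ('x, 'g, 'k) eq_obj" where
  "Ind a n \<rho> = ((\<lambda>x. if x \<in> orb a then n else 0),
      (\<lambda>g x. if x \<in> orb a then lam a g x \<cdot>\<^sub>m \<rho> (hh a g x) else 1\<^sub>m 0))"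

lemma G_cancel: "\<lbrakk>x \<in> carrier G; y \<in> carrier G\<rbrakk> \<Longrightarrow> x \<otimes>\<^bsub>G\<^esub> (inv\<^bsub>G\<^esub> x \<otimes>\<^bsub>G\<^esub> y) = y"
  by (simp add: G.m_assoc[symmetric])

lemma act_inv: "\<lbrakk>g \<in> carrier G; x \<in> carrier X\<rbrakk> \<Longrightarrow> act (inv\<^bsub>G\<^esub> g) (act g x) = x"
  using act_mult[of "inv\<^bsub>G\<^esub> g" g x] act_one by simp

lemma orb_sub: "a \<in> carrier X \<Longrightarrow> orb a \<subseteq> carrier X"
  unfolding orb_def using act_cl by auto

lemma a_orb: "a \<in> carrier X \<Longrightarrow> a \<in> orb a"
  unfolding orb_def using act_one by force

lemma rep_a: "rep a a = \<one>\<^bsub>G\<^esub>" by (simp add: rep_def)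

lemma rep_props: assumes "a \<in> carrier X" "x \<in> orb a"
  shows "rep a x \<in> carrier G" "act (rep a x) a = x"
proof -
  have "rep a x \<in> carrier G \<and> act (rep a x) a = x"
  proof (cases "x = a")
    case True thus ?thesis using assms act_one by (simp add: rep_def)
  next
    case False
    from assms(2) obtain g where "g \<in> carrier G" "act g a = x" unfolding orb_def by auto
    hence "\<exists>g. g \<in> carrier G \<and> act g a = x" by blast
    from someI_ex[OF this] show ?thesis using False by (simp add: rep_def)
  qed
  thus "rep a x \<in> carrier G" "act (rep a x) a = x" by auto
qed

lemma orb_act: assumes "a \<in> carrier X" "g \<in> carrier G" "x \<in> carrier X"
  shows "act g x \<in> orb a \<longleftrightarrow> x \<in> orb a"
proof
  assume "x \<in> orb a"
  then obtain k where k: "k \<in> carrier G" "x = act k a" unfolding orb_def by auto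
  hence "act g x = act (g \<otimes>\<^bsub>G\<^esub> k) a" using act_mult assms by auto
  thus "act g x \<in> orb a" unfolding orb_def using k assms by auto
next
  assume "act g x \<in> orb a"
  then obtain k where k: "k \<in> carrier G" "act g x = act k a" unfolding orb_def by auto
  hence "x = act (inv\<^bsub>G\<^esub> g) (act k a)" using act_inv assms by metis
  also have "\<dots> = act (inv\<^bsub>G\<^esub> g \<otimes>\<^bsub>G\<^esub> k) a" using act_mult assms k by auto
  finally show "x \<in> orb a" unfolding orb_def using k assms by auto
qed

lemma stab_iff: "h \<in> stabilizer G act a \<longleftrightarrow> h \<in> carrier G \<and> act h a = a"
  by (simp add: stabilizer_def)

lemma hh_stab: assumes "a \<in> carrier X" "g \<in> carrier G" "x \<in> orb a"
  shows "hh a g x \<in> stabilizer G act a"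
proof -
  have x: "x \<in> carrier X" using assms orb_sub by auto
  have z: "act g x \<in> orb a" using orb_act assms x by auto
  note rz = rep_props[OF assms(1) z] and rx = rep_props[OF assms(1) assms(3)]
  have "act (hh a g x) a = act (inv\<^bsub>G\<^esub> (rep a (act g x))) (act g (act (rep a x) a))"
    unfolding hh_def using act_mult assms rz rx act_cl x by simp
  also have "\<dots> = a" using rx rz act_inv assms by metis
  finally show ?thesis unfolding stab_iff hh_def using rz rx assms by simp
qed

lemma hh_eq: assumes "a \<in> carrier X" "g \<in> carrier G" "x \<in> orb a"
  shows "rep a (act g x) \<otimes>\<^bsub>G\<^esub> hh a g x = g \<otimes>\<^bsub>G\<^esub> rep a x"
proof -
  have x: "x \<in> carrier X" using assms orb_sub by auto
  have z: "act g x \<in> orb a" using orb_act assms x by auto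
  note rz = rep_props[OF assms(1) z] and rx = rep_props[OF assms(1) assms(3)]
  show ?thesis unfolding hh_def using rz rx assms by (simp add: G.m_assoc[symmetric])
qed

lemma hh_mult: assumes "a \<in> carrier X" "g \<in> carrier G" "k \<in> carrier G" "x \<in> orb a"
  shows "hh a (g \<otimes>\<^bsub>G\<^esub> k) x = hh a g (act k x) \<otimes>\<^bsub>G\<^esub> hh a k x"
proof -
  have x: "x \<in> carrier X" using assms orb_sub by auto
  have y: "act k x \<in> orb a" using orb_act assms x by auto
  have z: "act g (act k x) \<in> orb a" using orb_act assms x y act_cl by auto
  note rz = rep_props[OF assms(1) z] and rx = rep_props[OF assms(1) assms(4)]
    and ry = rep_props[OF assms(1) y]
  show ?thesis unfolding hh_def using rz rx ry assms x act_mult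
    by (simp add: G.m_assoc G_cancel)
qed

lemma hh_a: assumes "h \<in> stabilizer G act a" shows "hh a h a = h"
  using assms unfolding stab_iff hh_def by (simp add: rep_a)

lemma lam_a: assumes "a \<in> carrier X" "h \<in> stabilizer G act a" shows "lam a h a = 1"
  using assms unfolding lam_def by (simp add: hh_a rep_a stab_iff gam_l1 gam_r1)

lemma lam_nz: assumes "a \<in> carrier X" "g \<in> carrier G" "x \<in> orb a"
  shows "lam a g x \<noteq> 0"
proof -
  have x: "x \<in> carrier X" using assms orb_sub by auto
  have z: "act g x \<in> orb a" using orb_act assms x by auto
  note rz = rep_props[OF assms(1) z] and rx = rep_props[OF assms(1) assms(3)]
  have "hh a g x \<in> carrier G" using hh_stab[OF assms] stab_iff by auto
  thus ?thesis unfolding lam_def using gam_nz rz rx assms by auto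
qed

lemma lam_mult: assumes a: "a \<in> carrier X" and g: "g \<in> carrier G" and k: "k \<in> carrier G"
  and xo: "x \<in> orb a"
  shows "lam a (g \<otimes>\<^bsub>G\<^esub> k) x * \<gamma> (hh a g (act k x)) (hh a k x) a
     = \<gamma> g k x * lam a g (act k x) * lam a k x"
proof -
  have x: "x \<in> carrier X" using xo a orb_sub by auto
  have yo: "act k x \<in> orb a" using orb_act a k x xo by auto
  have y: "act k x \<in> carrier X" using act_cl k x by auto
  have zo: "act g (act k x) \<in> orb a" using orb_act a g y yo by auto
  define rx where "rx = rep a x"
  define ry where "ry = rep a (act k x)"
  define rz where "rz = rep a (act g (act k x))"
  define h1 where "h1 = hh a g (act k x)"
  define h2 where "h2 = hh a k x"
  have rx: "rx \<in> carrier G" "act rx a = x" using rep_props[OF a xo] rx_def by auto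
  have ry: "ry \<in> carrier G" "act ry a = act k x" using rep_props[OF a yo] ry_def by auto
  have rz: "rz \<in> carrier G" using rep_props[OF a zo] rz_def by auto
  have h1: "h1 \<in> carrier G" "act h1 a = a" using hh_stab[OF a g yo] h1_def stab_iff by auto
  have h2: "h2 \<in> carrier G" "act h2 a = a" using hh_stab[OF a k xo] h2_def stab_iff by auto
  have e1: "rz \<otimes>\<^bsub>G\<^esub> h1 = g \<otimes>\<^bsub>G\<^esub> ry" using hh_eq[OF a g yo] rz_def h1_def ry_def by simp
  have e2: "ry \<otimes>\<^bsub>G\<^esub> h2 = k \<otimes>\<^bsub>G\<^esub> rx" using hh_eq[OF a k xo] rx_def h2_def ry_def by simp
  have gk: "act (g \<otimes>\<^bsub>G\<^esub> k) x = act g (act k x)" using act_mult g k x by simp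
  have hgk: "hh a (g \<otimes>\<^bsub>G\<^esub> k) x = h1 \<otimes>\<^bsub>G\<^esub> h2" using hh_mult[OF a g k xo] h1_def h2_def by simp
  have i: "\<gamma> h1 h2 a * \<gamma> rz (h1 \<otimes>\<^bsub>G\<^esub> h2) a = \<gamma> (g \<otimes>\<^bsub>G\<^esub> ry) h2 a * \<gamma> rz h1 a"
    using gam_coc[OF rz h1(1) h2(1) a] e1 h2 by simp
  have ii: "\<gamma> ry h2 a * \<gamma> g (k \<otimes>\<^bsub>G\<^esub> rx) a = \<gamma> (g \<otimes>\<^bsub>G\<^esub> ry) h2 a * \<gamma> g ry a"
    using gam_coc[OF g ry(1) h2(1) a] e2 h2 by simp
  have iii: "\<gamma> k rx a * \<gamma> g (k \<otimes>\<^bsub>G\<^esub> rx) a = \<gamma> (g \<otimes>\<^bsub>G\<^esub> k) rx a * \<gamma> g k x"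
    using gam_coc[OF g k rx(1) a] rx by simp
  have L: "lam a (g \<otimes>\<^bsub>G\<^esub> k) x = \<gamma> rz (h1 \<otimes>\<^bsub>G\<^esub> h2) a / \<gamma> (g \<otimes>\<^bsub>G\<^esub> k) rx a"
    unfolding lam_def gk hgk rz_def rx_def ..
  have L1: "lam a g (act k x) = \<gamma> rz h1 a / \<gamma> g ry a"
    unfolding lam_def rz_def h1_def ry_def ..
  have L2: "lam a k x = \<gamma> ry h2 a / \<gamma> k rx a"
    unfolding lam_def ry_def h2_def rx_def ..
  have i': "\<gamma> rz (h1 \<otimes>\<^bsub>G\<^esub> h2) a * \<gamma> h1 h2 a = \<gamma> (g \<otimes>\<^bsub>G\<^esub> ry) h2 a * \<gamma> rz h1 a"
    using i by (simp only: mult.commute)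
  have nz1: "\<gamma> (g \<otimes>\<^bsub>G\<^esub> k) rx a \<noteq> 0" using gam_nz g k rx(1) a by simp
  have nz2: "\<gamma> g ry a \<noteq> 0" using gam_nz g ry(1) a by simp
  have nz3: "\<gamma> k rx a \<noteq> 0" using gam_nz k rx(1) a by simp
  show ?thesis unfolding L L1 L2 h1_def[symmetric] h2_def[symmetric]
    by (rule field_aux[OF i' ii iii nz1 nz2 nz3])
qed

end



lemma smult_mult_both: assumes "(A::'k::field mat) \<in> carrier_mat nr m" "B \<in> carrier_mat m nc"
  shows "(a \<cdot>\<^sub>m A) * (b \<cdot>\<^sub>m B) = (a*b) \<cdot>\<^sub>m (A*B)"
proof -
  have "(a \<cdot>\<^sub>m A) * (b \<cdot>\<^sub>m B) = a \<cdot>\<^sub>m (A * (b \<cdot>\<^sub>m B))"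
    using assms by (intro mult_smult_assoc_mat) auto
  also have "\<dots> = a \<cdot>\<^sub>m (b \<cdot>\<^sub>m (A * B))" using mult_smult_distrib[OF assms] by simp
  finally show ?thesis by (simp add: smult_smult_mat')
qed

lemma lin0: "lin_subspace 0 S \<Longrightarrow> S = {0\<^sub>v 0} \<and> S = carrier_vec 0"
  unfolding lin_subspace_def carrier_vec0 by auto

lemma obj_inv: assumes "eq_object G X act \<gamma> V" "g \<in> carrier G" "x \<in> carrier X"
  shows "snd V g x \<in> carrier_mat (fst V (act g x)) (fst V x) \<and>
     (\<exists>v. v \<in> carrier_mat (fst V x) (fst V (act g x)) \<and>
           v * snd V g x = 1\<^sub>m (fst V x) \<and> snd V g x * v = 1\<^sub>m (fst V (act g x)))"
proof -
  have "\<forall>g\<in>carrier G. \<forall>x\<in>carrier X. snd V g x \<in> carrier_mat (fst V (act g x)) (fst V x) \<and>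
     (\<exists>v. v \<in> carrier_mat (fst V x) (fst V (act g x)) \<and>
           v * snd V g x = 1\<^sub>m (fst V x) \<and> snd V g x * v = 1\<^sub>m (fst V (act g x)))"
    using assms(1) unfolding eq_object_def Let_def by (rule conjunct1)
  from bspec[OF bspec[OF this assms(2)] assms(3)] show ?thesis .
qed

lemma obj_mult: assumes "eq_object G X act \<gamma> V" "g \<in> carrier G" "h \<in> carrier G" "x \<in> carrier X"
  shows "snd V (g \<otimes>\<^bsub>G\<^esub> h) x = \<gamma> g h x \<cdot>\<^sub>m (snd V g (act h x) * snd V h x)"
proof -
  have "\<forall>g\<in>carrier G. \<forall>h\<in>carrier G. \<forall>x\<in>carrier X.
      snd V (g \<otimes>\<^bsub>G\<^esub> h) x = \<gamma> g h x \<cdot>\<^sub>m (snd V g (act h x) * snd V h x)"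
    using assms(1) unfolding eq_object_def Let_def by (rule conjunct2)
  from bspec[OF bspec[OF bspec[OF this assms(2)] assms(3)] assms(4)] show ?thesis .
qed

lemma tw_car: "tw_module G H \<phi> n \<rho> \<Longrightarrow> t \<in> H \<Longrightarrow> \<rho> t \<in> carrier_mat n n"
  unfolding tw_module_def by (elim conjE bspec)
lemma tw_mul: "tw_module G H \<phi> n \<rho> \<Longrightarrow> s \<in> H \<Longrightarrow> t \<in> H \<Longrightarrow> \<rho> (s \<otimes>\<^bsub>G\<^esub> t) = \<phi> s t \<cdot>\<^sub>m (\<rho> s * \<rho> t)"
  unfolding tw_module_def by (elim conjE) (drule bspec, assumption, drule bspec, assumption, assumption)
lemma tw_one: "tw_module G H \<phi> n \<rho> \<Longrightarrow> \<rho> \<one>\<^bsub>G\<^esub> = 1\<^sub>m n"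
  unfolding tw_module_def by (elim conjE)

context ctx begin

lemma stab_one: "a \<in> carrier X \<Longrightarrow> \<one>\<^bsub>G\<^esub> \<in> stabilizer G act a"
  by (simp add: stab_iff act_one)

lemma stab_mult: "a \<in> carrier X \<Longrightarrow> h \<in> stabilizer G act a \<Longrightarrow> k \<in> stabilizer G act a \<Longrightarrow>
   h \<otimes>\<^bsub>G\<^esub> k \<in> stabilizer G act a"
  by (simp add: stab_iff act_mult)

lemma stab_inv: assumes a: "a \<in> carrier X" and h: "h \<in> stabilizer G act a"
  shows "inv\<^bsub>G\<^esub> h \<in> stabilizer G act a"
proof -
  have hc: "h \<in> carrier G" and ha: "act h a = a" using h stab_iff by auto
  have "act (inv\<^bsub>G\<^esub> h) (act h a) = a" by (rule act_inv[OF hc a])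
  hence "act (inv\<^bsub>G\<^esub> h) a = a" using ha by simp
  thus ?thesis using hc by (simp add: stab_iff)
qed

lemma tw_inv: assumes a: "a \<in> carrier X" and tw: "tw_module G (stabilizer G act a) (\<lambda>g h. \<gamma> g h a) n \<rho>"
  and h: "h \<in> stabilizer G act a"
  obtains B where "B \<in> carrier_mat n n" "\<rho> h * B = 1\<^sub>m n" "B * \<rho> h = 1\<^sub>m n"
proof -
  have ih: "inv\<^bsub>G\<^esub> h \<in> stabilizer G act a" using stab_inv[OF a h] .
  have c: "\<rho> h \<in> carrier_mat n n" "\<rho> (inv\<^bsub>G\<^esub> h) \<in> carrier_mat n n"
    using tw_car[OF tw h] tw_car[OF tw ih] by auto
  have hc: "h \<in> carrier G" using h stab_iff by auto
  have "\<rho> (h \<otimes>\<^bsub>G\<^esub> inv\<^bsub>G\<^esub> h) = \<gamma> h (inv\<^bsub>G\<^esub> h) a \<cdot>\<^sub>m (\<rho> h * \<rho> (inv\<^bsub>G\<^esub> h))"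
    using tw_mul[OF tw h ih] by simp
  hence e: "1\<^sub>m n = \<gamma> h (inv\<^bsub>G\<^esub> h) a \<cdot>\<^sub>m (\<rho> h * \<rho> (inv\<^bsub>G\<^esub> h))"
    using tw_one[OF tw] hc by simp
  define B where "B = \<gamma> h (inv\<^bsub>G\<^esub> h) a \<cdot>\<^sub>m \<rho> (inv\<^bsub>G\<^esub> h)"
  have Bc: "B \<in> carrier_mat n n" using c B_def by simp
  have f: "\<rho> h * B = \<gamma> h (inv\<^bsub>G\<^esub> h) a \<cdot>\<^sub>m (\<rho> h * \<rho> (inv\<^bsub>G\<^esub> h))"
    unfolding B_def by (rule mult_smult_distrib[OF c])
  have 1: "\<rho> h * B = 1\<^sub>m n" by (simp only: f e[symmetric])
  have 2: "B * \<rho> h = 1\<^sub>m n" using mat_mult_left_right_inverse[OF c(1) Bc 1] .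
  show ?thesis using Bc 1 2 by (rule that)
qed

lemma Ind_fst: "fst (Ind a n \<rho>) x = (if x \<in> orb a then n else 0)" by (simp add: Ind_def)
lemma Ind_snd: "snd (Ind a n \<rho>) g x = (if x \<in> orb a then lam a g x \<cdot>\<^sub>m \<rho> (hh a g x) else 1\<^sub>m 0)"
  by (simp add: Ind_def)

lemma Ind_obj: assumes a: "a \<in> carrier X" and tw: "tw_module G (stabilizer G act a) (\<lambda>g h. \<gamma> g h a) n \<rho>"
  shows "eq_object G X act \<gamma> (Ind a n \<rho>)"
proof -
  have rc: "\<And>t. t \<in> stabilizer G act a \<Longrightarrow> \<rho> t \<in> carrier_mat n n" using tw_car[OF tw] by blast
  have P1: "snd (Ind a n \<rho>) g x \<in> carrier_mat (fst (Ind a n \<rho>) (act g x)) (fst (Ind a n \<rho>) x) \<and>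
      (\<exists>v. v \<in> carrier_mat (fst (Ind a n \<rho>) x) (fst (Ind a n \<rho>) (act g x)) \<and>
           v * snd (Ind a n \<rho>) g x = 1\<^sub>m (fst (Ind a n \<rho>) x) \<and>
           snd (Ind a n \<rho>) g x * v = 1\<^sub>m (fst (Ind a n \<rho>) (act g x)))"
    if g: "g \<in> carrier G" and x: "x \<in> carrier X" for g x
  proof (cases "x \<in> orb a")
    case True
    have gx: "act g x \<in> orb a" using orb_act[OF a g x] True by simp
    have hs: "hh a g x \<in> stabilizer G act a" by (rule hh_stab[OF a g True])
    obtain B where B: "B \<in> carrier_mat n n" "\<rho> (hh a g x) * B = 1\<^sub>m n" "B * \<rho> (hh a g x) = 1\<^sub>m n"
      by (rule tw_inv[OF a tw hs])
    have R: "\<rho> (hh a g x) \<in> carrier_mat n n" by (rule rc[OF hs])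
    have ln: "lam a g x \<noteq> 0" using lam_nz a g True by auto
    have li: "(1/lam a g x) * lam a g x = 1" "lam a g x * (1/lam a g x) = 1" using ln by simp_all
    have "((1/lam a g x) \<cdot>\<^sub>m B) * (lam a g x \<cdot>\<^sub>m \<rho> (hh a g x)) = ((1/lam a g x) * lam a g x) \<cdot>\<^sub>m (B * \<rho> (hh a g x))"
      by (rule smult_mult_both[OF B(1) R])
    also have "\<dots> = 1\<^sub>m n" unfolding li B(3) by (rule smult_one_mat')
    finally have 1: "((1/lam a g x) \<cdot>\<^sub>m B) * (lam a g x \<cdot>\<^sub>m \<rho> (hh a g x)) = 1\<^sub>m n" .
    have "(lam a g x \<cdot>\<^sub>m \<rho> (hh a g x)) * ((1/lam a g x) \<cdot>\<^sub>m B) = (lam a g x * (1/lam a g x)) \<cdot>\<^sub>m (\<rho> (hh a g x) * B)"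
      by (rule smult_mult_both[OF R B(1)])
    also have "\<dots> = 1\<^sub>m n" unfolding li B(2) by (rule smult_one_mat')
    finally have 2: "(lam a g x \<cdot>\<^sub>m \<rho> (hh a g x)) * ((1/lam a g x) \<cdot>\<^sub>m B) = 1\<^sub>m n" .
    have C1: "lam a g x \<cdot>\<^sub>m \<rho> (hh a g x) \<in> carrier_mat n n" using R by simp
    have C2: "(1/lam a g x) \<cdot>\<^sub>m B \<in> carrier_mat n n" using B(1) by simp
    have U: "snd (Ind a n \<rho>) g x = lam a g x \<cdot>\<^sub>m \<rho> (hh a g x)" using True by (simp add: Ind_snd)
    have D: "fst (Ind a n \<rho>) x = n" "fst (Ind a n \<rho>) (act g x) = n" using True gx by (simp_all add: Ind_fst)
    show ?thesis unfolding U D by (intro conjI exI[of _ "(1/lam a g x) \<cdot>\<^sub>m B"] C1 C2 1 2)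
  next
    case False
    have gx: "act g x \<notin> orb a" using orb_act[OF a g x] False by simp
    have U: "snd (Ind a n \<rho>) g x = 1\<^sub>m 0" using False by (simp add: Ind_snd)
    have D: "fst (Ind a n \<rho>) x = 0" "fst (Ind a n \<rho>) (act g x) = 0" using False gx by (simp_all add: Ind_fst)
    have C: "(1\<^sub>m 0 :: 'k mat) \<in> carrier_mat 0 0" "(1\<^sub>m 0 :: 'k mat) * 1\<^sub>m 0 = 1\<^sub>m 0" by simp_all
    show ?thesis unfolding U D by (intro conjI exI[of _ "1\<^sub>m 0"] C)
  qed
  have P2: "snd (Ind a n \<rho>) (g \<otimes>\<^bsub>G\<^esub> h) x =
       \<gamma> g h x \<cdot>\<^sub>m (snd (Ind a n \<rho>) g (act h x) * snd (Ind a n \<rho>) h x)"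
    if g: "g \<in> carrier G" and h: "h \<in> carrier G" and x: "x \<in> carrier X" for g h x
  proof (cases "x \<in> orb a")
    case True
    have hx: "act h x \<in> orb a" using orb_act[OF a h x] True by simp
    have h1: "hh a g (act h x) \<in> stabilizer G act a" using hh_stab a g hx by auto
    have h2: "hh a h x \<in> stabilizer G act a" using hh_stab a h True by auto
    have R1: "\<rho> (hh a g (act h x)) \<in> carrier_mat n n" using rc h1 by auto
    have R2: "\<rho> (hh a h x) \<in> carrier_mat n n" using rc h2 by auto
    have "\<rho> (hh a (g \<otimes>\<^bsub>G\<^esub> h) x) = \<gamma> (hh a g (act h x)) (hh a h x) a \<cdot>\<^sub>m
         (\<rho> (hh a g (act h x)) * \<rho> (hh a h x))"
      unfolding hh_mult[OF a g h True] using tw_mul[OF tw h1 h2] by simp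
    hence "snd (Ind a n \<rho>) (g \<otimes>\<^bsub>G\<^esub> h) x = (lam a (g \<otimes>\<^bsub>G\<^esub> h) x * \<gamma> (hh a g (act h x)) (hh a h x) a)
         \<cdot>\<^sub>m (\<rho> (hh a g (act h x)) * \<rho> (hh a h x))"
      unfolding Ind_snd using True by (simp add: smult_smult_mat')
    also have "\<dots> = (\<gamma> g h x * (lam a g (act h x) * lam a h x))
         \<cdot>\<^sub>m (\<rho> (hh a g (act h x)) * \<rho> (hh a h x))"
      unfolding lam_mult[OF a g h True] by (simp add: mult_ac)
    also have "\<dots> = \<gamma> g h x \<cdot>\<^sub>m (snd (Ind a n \<rho>) g (act h x) * snd (Ind a n \<rho>) h x)"
      unfolding Ind_snd using True hx smult_mult_both[OF R1 R2] by (simp add: smult_smult_mat')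
    finally show ?thesis .
  next
    case False
    have hx: "act h x \<notin> orb a" using orb_act[OF a h x] False by simp
    show ?thesis unfolding Ind_snd using False hx by (intro mat00_eq) auto
  qed
  show ?thesis unfolding eq_object_def Let_def by (intro conjI ballI P1 P2)
qed

lemma simple_crit: assumes obj: "eq_object G X act \<gamma> V" and a: "a \<in> carrier X"
  and supp: "\<And>x. x \<in> carrier X \<Longrightarrow> x \<notin> orb a \<Longrightarrow> fst V x = 0"
  and nz: "fst V a \<noteq> 0"
  and pt: "\<And>W. eq_subobject G X act V W \<Longrightarrow> W a = {0\<^sub>v (fst V a)} \<or> W a = carrier_vec (fst V a)"
  shows "eq_simple G X act \<gamma> V"
proof -
  have sub: "(\<forall>x\<in>carrier X. W x = {0\<^sub>v (fst V x)}) \<or> (\<forall>x\<in>carrier X. W x = carrier_vec (fst V x))"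
    if W: "eq_subobject G X act V W" for W
  proof -
    have ls: "\<And>x. x \<in> carrier X \<Longrightarrow> lin_subspace (fst V x) (W x)"
      and st: "\<And>g x w. g \<in> carrier G \<Longrightarrow> x \<in> carrier X \<Longrightarrow> w \<in> W x \<Longrightarrow> snd V g x *\<^sub>v w \<in> W (act g x)"
      using W unfolding eq_subobject_def by auto
    have off: "W x = {0\<^sub>v (fst V x)} \<and> W x = carrier_vec (fst V x)" if "x \<in> carrier X" "x \<notin> orb a" for x
    proof -
      have f: "fst V x = 0" by (rule supp[OF that])
      have "lin_subspace 0 (W x)" using ls[OF that(1)] f by simp
      from lin0[OF this] show ?thesis unfolding f .
    qed
    from pt[OF W] show ?thesis
    proof
      assume Wa: "W a = {0\<^sub>v (fst V a)}"
      have "W x = {0\<^sub>v (fst V x)}" if x: "x \<in> carrier X" for x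
      proof (cases "x \<in> orb a")
        case False thus ?thesis using off x by auto
      next
        case True
        note r = rep_props[OF a True]
        define g where "g = inv\<^bsub>G\<^esub> (rep a x)"
        have g: "g \<in> carrier G" using r g_def by auto
        have gx: "act g x = a" using r act_inv a g_def by metis
        obtain v where v: "v \<in> carrier_mat (fst V x) (fst V a)" "v * snd V g x = 1\<^sub>m (fst V x)"
          and u: "snd V g x \<in> carrier_mat (fst V a) (fst V x)"
          using obj_inv[OF obj g x] gx by auto
        have "w = 0\<^sub>v (fst V x)" if w: "w \<in> W x" for w
        proof -
          have "snd V g x *\<^sub>v w \<in> W a" using st[OF g x w] gx by simp
          hence "snd V g x *\<^sub>v w = 0\<^sub>v (fst V a)" using Wa by simp
          moreover have "w \<in> carrier_vec (fst V x)" using ls[OF x] w unfolding lin_subspace_def by auto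
          ultimately show ?thesis using left_inv_inj[OF u v(1) v(2)] by blast
        qed
        moreover have "0\<^sub>v (fst V x) \<in> W x" using ls[OF x] unfolding lin_subspace_def by auto
        ultimately show ?thesis by blast
      qed
      thus ?thesis by blast
    next
      assume Wa: "W a = carrier_vec (fst V a)"
      have "W x = carrier_vec (fst V x)" if x: "x \<in> carrier X" for x
      proof (cases "x \<in> orb a")
        case False thus ?thesis using off x by auto
      next
        case True
        note r = rep_props[OF a True]
        define g where "g = rep a x"
        have g: "g \<in> carrier G" using r g_def by auto
        have gx: "act g a = x" using r g_def by auto
        obtain v where v: "v \<in> carrier_mat (fst V a) (fst V x)" "snd V g a * v = 1\<^sub>m (fst V x)"
          and u: "snd V g a \<in> carrier_mat (fst V x) (fst V a)"
          using obj_inv[OF obj g a] gx by auto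
        have "w \<in> W x" if w: "w \<in> carrier_vec (fst V x)" for w
        proof -
          have "v *\<^sub>v w \<in> W a" using Wa v w by simp
          from st[OF g a this] have "snd V g a *\<^sub>v (v *\<^sub>v w) \<in> W x" using gx by simp
          thus ?thesis using right_inv_surj[OF u v(1) v(2) w] by simp
        qed
        moreover have "W x \<subseteq> carrier_vec (fst V x)" using ls[OF x] unfolding lin_subspace_def by auto
        ultimately show ?thesis by blast
      qed
      thus ?thesis by blast
    qed
  qed
  show ?thesis unfolding eq_simple_def using obj a nz sub by blast
qed

lemma Ind_simple: assumes a: "a \<in> carrier X"
  and irr: "tw_irreducible G (stabilizer G act a) (\<lambda>g h. \<gamma> g h a) n \<rho>"
  shows "eq_simple G X act \<gamma> (Ind a n \<rho>)"
proof -
  have tw: "tw_module G (stabilizer G act a) (\<lambda>g h. \<gamma> g h a) n \<rho>" and n: "n \<noteq> 0"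
    using irr unfolding tw_irreducible_def by auto
  have ao: "a \<in> orb a" using a_orb[OF a] .
  show ?thesis
  proof (rule simple_crit[OF Ind_obj[OF a tw] a])
    show "\<And>x. x \<in> carrier X \<Longrightarrow> x \<notin> orb a \<Longrightarrow> fst (Ind a n \<rho>) x = 0" by (simp add: Ind_fst)
    show "fst (Ind a n \<rho>) a \<noteq> 0" using ao n by (simp add: Ind_fst)
    fix W assume W: "eq_subobject G X act (Ind a n \<rho>) W"
    have ls: "lin_subspace n (W a)" using W a ao unfolding eq_subobject_def by (auto simp: Ind_fst)
    have "\<rho> t *\<^sub>v v \<in> W a" if t: "t \<in> stabilizer G act a" and v: "v \<in> W a" for t v
    proof -
      have tc: "t \<in> carrier G" "act t a = a" using t stab_iff by auto
      have "snd (Ind a n \<rho>) t a = \<rho> t" unfolding Ind_snd using ao lam_a[OF a t] hh_a[OF t]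
        by (simp add: smult_one_mat')
      moreover have "snd (Ind a n \<rho>) t a *\<^sub>v v \<in> W (act t a)"
        using W tc(1) a v unfolding eq_subobject_def by blast
      ultimately show ?thesis using tc(2) by simp
    qed
    hence "W a = {0\<^sub>v n} \<or> W a = carrier_vec n" using irr ls unfolding tw_irreducible_def by blast
    thus "W a = {0\<^sub>v (fst (Ind a n \<rho>) a)} \<or> W a = carrier_vec (fst (Ind a n \<rho>) a)"
      using ao by (simp add: Ind_fst)
  qed
qed

end



lemma morph_car: "eq_morphism G X act f V W \<Longrightarrow> x \<in> carrier X \<Longrightarrow> f x \<in> carrier_mat (fst W x) (fst V x)"
  unfolding eq_morphism_def by (elim conjE) (erule bspec)

lemma morph_eq: assumes "eq_morphism G X act f V W" "g \<in> carrier G" "x \<in> carrier X"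
  shows "f (act g x) * snd V g x = snd W g x * f x"
proof -
  have "\<forall>g\<in>carrier G. \<forall>x\<in>carrier X. f (act g x) * snd V g x = snd W g x * f x"
    using assms(1) unfolding eq_morphism_def by (rule conjunct2)
  from bspec[OF bspec[OF this assms(2)] assms(3)] show ?thesis .
qed

lemma lin_full: "lin_subspace n (carrier_vec n :: 'k::field vec set)"
  unfolding lin_subspace_def by auto

lemma smult_zero_vec': "(c::'k::field) \<cdot>\<^sub>v 0\<^sub>v n = 0\<^sub>v n"
  by (rule eq_vecI) auto

lemma lin_zero: "lin_subspace n {0\<^sub>v n :: 'k::field vec}"
  unfolding lin_subspace_def by (auto simp: smult_zero_vec')

lemma assoc4: assumes "(A::'k::field mat) \<in> carrier_mat n1 n2" "B \<in> carrier_mat n2 n3"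
  "C \<in> carrier_mat n3 n4" "D \<in> carrier_mat n4 n5"
  shows "(A * B) * (C * D) = A * (B * C) * D"
proof -
  have "(A * B) * (C * D) = A * (B * (C * D))"
    by (rule assoc_mult_mat[OF assms(1,2) mult_carrier_mat[OF assms(3,4)]])
  also have "B * (C * D) = (B * C) * D" by (rule assoc_mult_mat[OF assms(2,3,4), symmetric])
  also have "A * ((B * C) * D) = A * (B * C) * D"
    by (rule assoc_mult_mat[OF assms(1) mult_carrier_mat[OF assms(2,3)] assms(4), symmetric])
  finally show ?thesis .
qed

lemma tw_iso_refl: fixes \<rho> :: "'g \<Rightarrow> 'k::field mat"
  assumes m: "tw_module G H \<phi> n \<rho>" shows "tw_isomorphic H n \<rho> n \<rho>"
proof -
  have H: "\<forall>t\<in>H. 1\<^sub>m n * \<rho> t = \<rho> t * 1\<^sub>m n"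
  proof
    fix t assume t: "t \<in> H"
    have r: "\<rho> t \<in> carrier_mat n n" by (rule tw_car[OF m t])
    show "1\<^sub>m n * \<rho> t = \<rho> t * 1\<^sub>m n" by (simp only: left_mult_one_mat[OF r] right_mult_one_mat[OF r])
  qed
  have o: "(1\<^sub>m n :: 'k mat) * 1\<^sub>m n = 1\<^sub>m n" by simp
  show ?thesis unfolding tw_isomorphic_def
    by (intro exI[of _ "1\<^sub>m n"] conjI one_carrier_mat o H)
qed

lemma tw_iso_sym: assumes m: "tw_module G H \<phi> n \<rho>" "tw_module G H \<phi>' n' \<rho>'"
  and i: "tw_isomorphic H n \<rho> n' \<rho>'" shows "tw_isomorphic H n' \<rho>' n \<rho>"
proof -
  obtain P Q where PQ: "P \<in> carrier_mat n' n" "Q \<in> carrier_mat n n'" "Q * P = 1\<^sub>m n" "P * Q = 1\<^sub>m n'"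
    "\<forall>t\<in>H. P * \<rho> t = \<rho>' t * P" using i unfolding tw_isomorphic_def
    by iprover
  have H: "\<forall>t\<in>H. Q * \<rho>' t = \<rho> t * Q"
  proof
    fix t assume t: "t \<in> H"
    have r: "\<rho> t \<in> carrier_mat n n" "\<rho>' t \<in> carrier_mat n' n'" by (rule tw_car[OF m(1) t], rule tw_car[OF m(2) t])
    have e: "P * \<rho> t = \<rho>' t * P" by (rule bspec[OF PQ(5) t])
    have s1: "Q * \<rho>' t * (P * Q) = Q * \<rho>' t"
      unfolding PQ(4) by (rule right_mult_one_mat[OF mult_carrier_mat[OF PQ(2) r(2)]])
    have s2: "Q * \<rho>' t * (P * Q) = Q * (\<rho>' t * P) * Q" by (rule assoc4[OF PQ(2) r(2) PQ(1) PQ(2)])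
    have s3: "Q * (P * \<rho> t) = (Q * P) * \<rho> t" by (rule assoc_mult_mat[OF PQ(2) PQ(1) r(1), symmetric])
    have "Q * \<rho>' t = Q * \<rho>' t * (P * Q)" by (simp only: s1)
    also have "\<dots> = Q * (\<rho>' t * P) * Q" by (rule s2)
    also have "\<dots> = Q * (P * \<rho> t) * Q" by (simp only: e)
    also have "\<dots> = (Q * P) * \<rho> t * Q" by (simp only: s3)
    also have "\<dots> = \<rho> t * Q" by (simp only: PQ(3) left_mult_one_mat[OF r(1)])
    finally show "Q * \<rho>' t = \<rho> t * Q" .
  qed
  show ?thesis unfolding tw_isomorphic_def
    by (intro exI[of _ Q] exI[of _ P] conjI PQ(1-4) H)
qed

lemma tw_iso_trans: assumes m: "tw_module G H \<phi> n \<rho>" "tw_module G H \<phi>' n' \<rho>'" "tw_module G H \<phi>'' n'' \<rho>''"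
  and i: "tw_isomorphic H n \<rho> n' \<rho>'" "tw_isomorphic H n' \<rho>' n'' \<rho>''"
  shows "tw_isomorphic H n \<rho> n'' \<rho>''"
proof -
  obtain P Q where PQ: "P \<in> carrier_mat n' n" "Q \<in> carrier_mat n n'" "Q * P = 1\<^sub>m n" "P * Q = 1\<^sub>m n'"
    "\<forall>t\<in>H. P * \<rho> t = \<rho>' t * P" using i(1) unfolding tw_isomorphic_def
    by iprover
  obtain P' Q' where PQ': "P' \<in> carrier_mat n'' n'" "Q' \<in> carrier_mat n' n''" "Q' * P' = 1\<^sub>m n'" "P' * Q' = 1\<^sub>m n''"
    "\<forall>t\<in>H. P' * \<rho>' t = \<rho>'' t * P'" using i(2) unfolding tw_isomorphic_def
    by iprover
  have c1: "(Q * Q') * (P' * P) = 1\<^sub>m n"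
    unfolding assoc4[OF PQ(2) PQ'(2) PQ'(1) PQ(1)]
    by (simp only: PQ'(3) right_mult_one_mat[OF PQ(2)] PQ(3))
  have c2: "(P' * P) * (Q * Q') = 1\<^sub>m n''"
    unfolding assoc4[OF PQ'(1) PQ(1) PQ(2) PQ'(2)]
    by (simp only: PQ(4) right_mult_one_mat[OF PQ'(1)] PQ'(4))
  have H: "\<forall>t\<in>H. (P' * P) * \<rho> t = \<rho>'' t * (P' * P)"
  proof
    fix t assume t: "t \<in> H"
    have r: "\<rho> t \<in> carrier_mat n n" "\<rho>' t \<in> carrier_mat n' n'" "\<rho>'' t \<in> carrier_mat n'' n''"
      by (rule tw_car[OF m(1) t], rule tw_car[OF m(2) t], rule tw_car[OF m(3) t])
    have e1: "P * \<rho> t = \<rho>' t * P" by (rule bspec[OF PQ(5) t])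
    have e2: "P' * \<rho>' t = \<rho>'' t * P'" by (rule bspec[OF PQ'(5) t])
    have "(P' * P) * \<rho> t = P' * (P * \<rho> t)" by (rule assoc_mult_mat[OF PQ'(1) PQ(1) r(1)])
    also have "\<dots> = P' * (\<rho>' t * P)" by (simp only: e1)
    also have "\<dots> = (P' * \<rho>' t) * P" by (rule assoc_mult_mat[OF PQ'(1) r(2) PQ(1), symmetric])
    also have "\<dots> = (\<rho>'' t * P') * P" by (simp only: e2)
    also have "\<dots> = \<rho>'' t * (P' * P)" by (rule assoc_mult_mat[OF r(3) PQ'(1) PQ(1)])
    finally show "(P' * P) * \<rho> t = \<rho>'' t * (P' * P)" .
  qed
  have C: "P' * P \<in> carrier_mat n'' n" "Q * Q' \<in> carrier_mat n n''"
    by (rule mult_carrier_mat[OF PQ'(1) PQ(1)], rule mult_carrier_mat[OF PQ(2) PQ'(2)])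
  show ?thesis unfolding tw_isomorphic_def
    by (intro exI[of _ "P' * P"] exI[of _ "Q * Q'"] conjI C c1 c2 H)
qed




context ctx begin

lemma inv_morph: assumes objV: "eq_object G X act \<gamma> V" and objW: "eq_object G X act \<gamma> W"
  and m: "eq_morphism G X act f' W V"
  and inv: "\<And>x. x \<in> carrier X \<Longrightarrow> f x \<in> carrier_mat (fst W x) (fst V x)"
    "\<And>x. x \<in> carrier X \<Longrightarrow> f x * f' x = 1\<^sub>m (fst W x)"
    "\<And>x. x \<in> carrier X \<Longrightarrow> f' x * f x = 1\<^sub>m (fst V x)"
  shows "eq_morphism G X act f V W"
  unfolding eq_morphism_def
proof (intro conjI ballI)
  fix x assume "x \<in> carrier X" thus "f x \<in> carrier_mat (fst W x) (fst V x)" by (rule inv(1))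
next
  fix g x assume g: "g \<in> carrier G" and x: "x \<in> carrier X"
  have gx: "act g x \<in> carrier X" using act_cl g x by blast
  have uV: "snd V g x \<in> carrier_mat (fst V (act g x)) (fst V x)" using obj_inv[OF objV g x] by (rule conjunct1)
  have uW: "snd W g x \<in> carrier_mat (fst W (act g x)) (fst W x)" using obj_inv[OF objW g x] by (rule conjunct1)
  have fx: "f x \<in> carrier_mat (fst W x) (fst V x)" by (rule inv(1)[OF x])
  have fgx: "f (act g x) \<in> carrier_mat (fst W (act g x)) (fst V (act g x))" by (rule inv(1)[OF gx])
  have f'x: "f' x \<in> carrier_mat (fst V x) (fst W x)" by (rule morph_car[OF m x])
  have f'gx: "f' (act g x) \<in> carrier_mat (fst V (act g x)) (fst W (act g x))" by (rule morph_car[OF m gx])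
  have me: "f' (act g x) * snd W g x = snd V g x * f' x" by (rule morph_eq[OF m g x])
  have "f (act g x) * snd V g x = f (act g x) * snd V g x * (f' x * f x)"
    by (simp only: inv(3)[OF x] right_mult_one_mat[OF mult_carrier_mat[OF fgx uV]])
  also have "\<dots> = f (act g x) * (snd V g x * f' x) * f x" by (rule assoc4[OF fgx uV f'x fx])
  also have "\<dots> = f (act g x) * ((snd V g x * f' x) * f x)"
    by (rule assoc_mult_mat[OF fgx mult_carrier_mat[OF uV f'x] fx])
  also have "\<dots> = f (act g x) * ((f' (act g x) * snd W g x) * f x)" by (simp only: me)
  also have "\<dots> = f (act g x) * (f' (act g x) * (snd W g x * f x))"
    by (simp only: assoc_mult_mat[OF f'gx uW fx])
  also have "\<dots> = (f (act g x) * f' (act g x)) * (snd W g x * f x)"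
    by (rule assoc_mult_mat[OF fgx f'gx mult_carrier_mat[OF uW fx], symmetric])
  also have "\<dots> = snd W g x * f x"
    by (simp only: inv(2)[OF gx] left_mult_one_mat[OF mult_carrier_mat[OF uW fx]])
  finally show "f (act g x) * snd V g x = snd W g x * f x" .
qed

lemma iso_refl: assumes obj: "eq_object G X act \<gamma> V" shows "eq_isomorphic G X act V V"
proof -
  have m: "eq_morphism G X act (\<lambda>x. 1\<^sub>m (fst V x)) V V"
    unfolding eq_morphism_def
  proof (intro conjI ballI)
    fix g x assume g: "g \<in> carrier G" and x: "x \<in> carrier X"
    have uV: "snd V g x \<in> carrier_mat (fst V (act g x)) (fst V x)" using obj_inv[OF obj g x] by (rule conjunct1)
    show "1\<^sub>m (fst V (act g x)) * snd V g x = snd V g x * 1\<^sub>m (fst V x)"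
      by (simp only: left_mult_one_mat[OF uV] right_mult_one_mat[OF uV])
  qed simp
  have o: "\<forall>x\<in>carrier X. (1\<^sub>m (fst V x) :: 'k mat) * 1\<^sub>m (fst V x) = 1\<^sub>m (fst V x) \<and> (1\<^sub>m (fst V x) :: 'k mat) * 1\<^sub>m (fst V x) = 1\<^sub>m (fst V x)"
    by simp
  show ?thesis unfolding eq_isomorphic_def
    by (intro exI[of _ "\<lambda>x. 1\<^sub>m (fst V x)"] conjI m o)
qed

lemma iso_sym: assumes "eq_isomorphic G X act V W" shows "eq_isomorphic G X act W V"
proof -
  obtain f f' where F: "eq_morphism G X act f V W" "eq_morphism G X act f' W V"
    "\<forall>x\<in>carrier X. f' x * f x = 1\<^sub>m (fst V x) \<and> f x * f' x = 1\<^sub>m (fst W x)"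
    using assms unfolding eq_isomorphic_def by iprover
  have "\<forall>x\<in>carrier X. f x * f' x = 1\<^sub>m (fst W x) \<and> f' x * f x = 1\<^sub>m (fst V x)"
  proof
    fix x assume x: "x \<in> carrier X"
    have h: "f' x * f x = 1\<^sub>m (fst V x) \<and> f x * f' x = 1\<^sub>m (fst W x)" by (rule bspec[OF F(3) x])
    show "f x * f' x = 1\<^sub>m (fst W x) \<and> f' x * f x = 1\<^sub>m (fst V x)" using conjunct2[OF h] conjunct1[OF h] by (rule conjI)
  qed
  thus ?thesis unfolding eq_isomorphic_def
    by (intro exI[of _ f'] exI[of _ f] conjI F(1,2))
qed

lemma comp_morph: assumes oA: "eq_object G X act \<gamma> A" and oB: "eq_object G X act \<gamma> B" and oC: "eq_object G X act \<gamma> C"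
    and m1: "eq_morphism G X act h1 A B" and m2: "eq_morphism G X act h2 B C"
  shows "eq_morphism G X act (\<lambda>x. h2 x * h1 x) A C"
  unfolding eq_morphism_def
proof (intro conjI ballI)
  fix x assume x: "x \<in> carrier X"
  show "h2 x * h1 x \<in> carrier_mat (fst C x) (fst A x)"
    by (rule mult_carrier_mat[OF morph_car[OF m2 x] morph_car[OF m1 x]])
next
  fix g x assume g: "g \<in> carrier G" and x: "x \<in> carrier X"
  have gx: "act g x \<in> carrier X" using act_cl g x by blast
  have c1: "h1 x \<in> carrier_mat (fst B x) (fst A x)" by (rule morph_car[OF m1 x])
  have c2: "h2 x \<in> carrier_mat (fst C x) (fst B x)" by (rule morph_car[OF m2 x])
  have c3: "h1 (act g x) \<in> carrier_mat (fst B (act g x)) (fst A (act g x))" by (rule morph_car[OF m1 gx])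
  have c4: "h2 (act g x) \<in> carrier_mat (fst C (act g x)) (fst B (act g x))" by (rule morph_car[OF m2 gx])
  have uA: "snd A g x \<in> carrier_mat (fst A (act g x)) (fst A x)" using obj_inv[OF oA g x] by (rule conjunct1)
  have uB: "snd B g x \<in> carrier_mat (fst B (act g x)) (fst B x)" using obj_inv[OF oB g x] by (rule conjunct1)
  have uC: "snd C g x \<in> carrier_mat (fst C (act g x)) (fst C x)" using obj_inv[OF oC g x] by (rule conjunct1)
  have "h2 (act g x) * h1 (act g x) * snd A g x = h2 (act g x) * (h1 (act g x) * snd A g x)"
    by (rule assoc_mult_mat[OF c4 c3 uA])
  also have "\<dots> = h2 (act g x) * (snd B g x * h1 x)" by (simp only: morph_eq[OF m1 g x])
  also have "\<dots> = (h2 (act g x) * snd B g x) * h1 x" by (rule assoc_mult_mat[OF c4 uB c1, symmetric])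
  also have "\<dots> = (snd C g x * h2 x) * h1 x" by (simp only: morph_eq[OF m2 g x])
  also have "\<dots> = snd C g x * (h2 x * h1 x)" by (rule assoc_mult_mat[OF uC c2 c1])
  finally show "h2 (act g x) * h1 (act g x) * snd A g x = snd C g x * (h2 x * h1 x)" .
qed

lemma iso_trans: assumes objU: "eq_object G X act \<gamma> U" and objV: "eq_object G X act \<gamma> V"
  and objW: "eq_object G X act \<gamma> W"
  and i1: "eq_isomorphic G X act U V" and i2: "eq_isomorphic G X act V W"
  shows "eq_isomorphic G X act U W"
proof -
  obtain f1 f1' where F1: "eq_morphism G X act f1 U V" "eq_morphism G X act f1' V U"
    "\<forall>x\<in>carrier X. f1' x * f1 x = 1\<^sub>m (fst U x) \<and> f1 x * f1' x = 1\<^sub>m (fst V x)"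
    using i1 unfolding eq_isomorphic_def by iprover
  obtain f2 f2' where F2: "eq_morphism G X act f2 V W" "eq_morphism G X act f2' W V"
    "\<forall>x\<in>carrier X. f2' x * f2 x = 1\<^sub>m (fst V x) \<and> f2 x * f2' x = 1\<^sub>m (fst W x)"
    using i2 unfolding eq_isomorphic_def by iprover
  have m: "eq_morphism G X act (\<lambda>x. f2 x * f1 x) U W" by (rule comp_morph[OF objU objV objW F1(1) F2(1)])
  have m': "eq_morphism G X act (\<lambda>x. f1' x * f2' x) W U" by (rule comp_morph[OF objW objV objU F2(2) F1(2)])
  have I: "\<forall>x\<in>carrier X. (f1' x * f2' x) * (f2 x * f1 x) = 1\<^sub>m (fst U x) \<and> (f2 x * f1 x) * (f1' x * f2' x) = 1\<^sub>m (fst W x)"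
  proof
    fix x assume x: "x \<in> carrier X"
    have c1: "f1 x \<in> carrier_mat (fst V x) (fst U x)" by (rule morph_car[OF F1(1) x])
    have c2: "f1' x \<in> carrier_mat (fst U x) (fst V x)" by (rule morph_car[OF F1(2) x])
    have c3: "f2 x \<in> carrier_mat (fst W x) (fst V x)" by (rule morph_car[OF F2(1) x])
    have c4: "f2' x \<in> carrier_mat (fst V x) (fst W x)" by (rule morph_car[OF F2(2) x])
    have e1: "f1' x * f1 x = 1\<^sub>m (fst U x)" "f1 x * f1' x = 1\<^sub>m (fst V x)" using bspec[OF F1(3) x] by (rule conjunct1, rule conjunct2)
    have e2: "f2' x * f2 x = 1\<^sub>m (fst V x)" "f2 x * f2' x = 1\<^sub>m (fst W x)" using bspec[OF F2(3) x] by (rule conjunct1, rule conjunct2)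
    have 1: "(f1' x * f2' x) * (f2 x * f1 x) = 1\<^sub>m (fst U x)"
      unfolding assoc4[OF c2 c4 c3 c1] by (simp only: e2(1) right_mult_one_mat[OF c2] e1(1))
    have 2: "(f2 x * f1 x) * (f1' x * f2' x) = 1\<^sub>m (fst W x)"
      unfolding assoc4[OF c3 c1 c2 c4] by (simp only: e1(2) right_mult_one_mat[OF c3] e2(2))
    show "(f1' x * f2' x) * (f2 x * f1 x) = 1\<^sub>m (fst U x) \<and> (f2 x * f1 x) * (f1' x * f2' x) = 1\<^sub>m (fst W x)"
      using 1 2 by (rule conjI)
  qed
  show ?thesis unfolding eq_isomorphic_def
    by (intro exI[of _ "\<lambda>x. f2 x * f1 x"] exI[of _ "\<lambda>x. f1' x * f2' x"] conjI m m' I)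
qed

end



lemma simple_obj: "eq_simple G X act \<gamma> V \<Longrightarrow> eq_object G X act \<gamma> V"
  unfolding eq_simple_def by (rule conjunct1)

lemma simple_nz: "eq_simple G X act \<gamma> V \<Longrightarrow> \<exists>x\<in>carrier X. fst V x \<noteq> 0"
  unfolding eq_simple_def by (elim conjE)

lemma simple_sub: assumes "eq_simple G X act \<gamma> V" "eq_subobject G X act V W"
  shows "(\<forall>x\<in>carrier X. W x = {0\<^sub>v (fst V x)}) \<or> (\<forall>x\<in>carrier X. W x = carrier_vec (fst V x))"
proof -
  have "\<forall>W. eq_subobject G X act V W \<longrightarrow>
      (\<forall>x\<in>carrier X. W x = {0\<^sub>v (fst V x)}) \<or> (\<forall>x\<in>carrier X. W x = carrier_vec (fst V x))"
    using assms(1) unfolding eq_simple_def by (elim conjE)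
  thus ?thesis using assms(2) by iprover
qed

context ctx begin

lemma Ind_morph: assumes a: "a \<in> carrier X"
  and tw: "tw_module G (stabilizer G act a) (\<lambda>g h. \<gamma> g h a) n \<rho>"
  and tw': "tw_module G (stabilizer G act a) (\<lambda>g h. \<gamma> g h a) n' \<rho>'"
  and P: "P \<in> carrier_mat n' n" and H: "\<forall>t\<in>stabilizer G act a. P * \<rho> t = \<rho>' t * P"
  shows "eq_morphism G X act (\<lambda>x. if x \<in> orb a then P else 1\<^sub>m 0) (Ind a n \<rho>) (Ind a n' \<rho>')"
  unfolding eq_morphism_def
proof (intro conjI ballI)
  fix x assume x: "x \<in> carrier X"
  show "(if x \<in> orb a then P else 1\<^sub>m 0) \<in> carrier_mat (fst (Ind a n' \<rho>') x) (fst (Ind a n \<rho>) x)"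
    using P by (cases "x \<in> orb a") (simp_all add: Ind_fst)
next
  fix g x assume g: "g \<in> carrier G" and x: "x \<in> carrier X"
  show "(if act g x \<in> orb a then P else 1\<^sub>m 0) * snd (Ind a n \<rho>) g x =
        snd (Ind a n' \<rho>') g x * (if x \<in> orb a then P else 1\<^sub>m 0)"
  proof (cases "x \<in> orb a")
    case True
    have gx: "act g x \<in> orb a" using orb_act[OF a g x] True by simp
    have hs: "hh a g x \<in> stabilizer G act a" by (rule hh_stab[OF a g True])
    have R: "\<rho> (hh a g x) \<in> carrier_mat n n" by (rule tw_car[OF tw hs])
    have R': "\<rho>' (hh a g x) \<in> carrier_mat n' n'" by (rule tw_car[OF tw' hs])
    have e: "P * \<rho> (hh a g x) = \<rho>' (hh a g x) * P" by (rule bspec[OF H hs])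
    have U: "snd (Ind a n \<rho>) g x = lam a g x \<cdot>\<^sub>m \<rho> (hh a g x)" using True by (simp add: Ind_snd)
    have U': "snd (Ind a n' \<rho>') g x = lam a g x \<cdot>\<^sub>m \<rho>' (hh a g x)" using True by (simp add: Ind_snd)
    have "P * (lam a g x \<cdot>\<^sub>m \<rho> (hh a g x)) = lam a g x \<cdot>\<^sub>m (P * \<rho> (hh a g x))"
      by (rule mult_smult_distrib[OF P R])
    also have "\<dots> = lam a g x \<cdot>\<^sub>m (\<rho>' (hh a g x) * P)" by (simp only: e)
    also have "\<dots> = (lam a g x \<cdot>\<^sub>m \<rho>' (hh a g x)) * P" by (rule mult_smult_assoc_mat[OF R' P, symmetric])
    finally show ?thesis by (simp only: U U' if_P[OF gx] if_P[OF True])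
  next
    case False
    have gx: "act g x \<notin> orb a" using orb_act[OF a g x] False by simp
    have U: "snd (Ind a n \<rho>) g x = 1\<^sub>m 0" using False by (simp add: Ind_snd)
    have U': "snd (Ind a n' \<rho>') g x = 1\<^sub>m 0" using False by (simp add: Ind_snd)
    show ?thesis by (simp only: U U' if_not_P[OF gx] if_not_P[OF False])
  qed
qed

lemma Ind_iso_rev: assumes a: "a \<in> carrier X"
  and tw: "tw_module G (stabilizer G act a) (\<lambda>g h. \<gamma> g h a) n \<rho>"
  and tw': "tw_module G (stabilizer G act a) (\<lambda>g h. \<gamma> g h a) n' \<rho>'"
  and i: "tw_isomorphic (stabilizer G act a) n \<rho> n' \<rho>'"
  shows "eq_isomorphic G X act (Ind a n \<rho>) (Ind a n' \<rho>')"
proof -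
  obtain P Q where PQ: "P \<in> carrier_mat n' n" "Q \<in> carrier_mat n n'" "Q * P = 1\<^sub>m n" "P * Q = 1\<^sub>m n'"
    "\<forall>t\<in>stabilizer G act a. P * \<rho> t = \<rho>' t * P" using i unfolding tw_isomorphic_def
    by iprover
  have m: "eq_morphism G X act (\<lambda>x. if x \<in> orb a then P else 1\<^sub>m 0) (Ind a n \<rho>) (Ind a n' \<rho>')"
    by (rule Ind_morph[OF a tw tw' PQ(1) PQ(5)])
  have o: "eq_object G X act \<gamma> (Ind a n \<rho>)" by (rule Ind_obj[OF a tw])
  have o': "eq_object G X act \<gamma> (Ind a n' \<rho>')" by (rule Ind_obj[OF a tw'])
  have c: "(if x \<in> orb a then Q else 1\<^sub>m 0) \<in> carrier_mat (fst (Ind a n \<rho>) x) (fst (Ind a n' \<rho>') x)" for x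
    using PQ(2) by (cases "x \<in> orb a") (simp_all add: Ind_fst)
  have i1: "(if x \<in> orb a then Q else 1\<^sub>m 0) * (if x \<in> orb a then P else 1\<^sub>m 0) = 1\<^sub>m (fst (Ind a n \<rho>) x)" for x
    using PQ(3) by (cases "x \<in> orb a") (simp_all add: Ind_fst)
  have i2: "(if x \<in> orb a then P else 1\<^sub>m 0) * (if x \<in> orb a then Q else 1\<^sub>m 0) = 1\<^sub>m (fst (Ind a n' \<rho>') x)" for x
    using PQ(4) by (cases "x \<in> orb a") (simp_all add: Ind_fst)
  have m': "eq_morphism G X act (\<lambda>x. if x \<in> orb a then Q else 1\<^sub>m 0) (Ind a n' \<rho>') (Ind a n \<rho>)"
    by (rule inv_morph[OF o' o m c i1 i2])
  have I: "\<forall>x\<in>carrier X. (if x \<in> orb a then Q else 1\<^sub>m 0) * (if x \<in> orb a then P else 1\<^sub>m 0) = 1\<^sub>m (fst (Ind a n \<rho>) x) \<and>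
      (if x \<in> orb a then P else 1\<^sub>m 0) * (if x \<in> orb a then Q else 1\<^sub>m 0) = 1\<^sub>m (fst (Ind a n' \<rho>') x)"
    by (intro ballI conjI i1 i2)
  show ?thesis unfolding eq_isomorphic_def
    by (intro exI[of _ "\<lambda>x. if x \<in> orb a then P else 1\<^sub>m 0"] exI[of _ "\<lambda>x. if x \<in> orb a then Q else 1\<^sub>m 0"] conjI m m' I)
qed

lemma Ind_snd_stab: assumes a: "a \<in> carrier X" and t: "t \<in> stabilizer G act a"
  shows "snd (Ind a n \<rho>) t a = \<rho> t"
proof -
  have "snd (Ind a n \<rho>) t a = lam a t a \<cdot>\<^sub>m \<rho> (hh a t a)" using a_orb[OF a] by (simp add: Ind_snd)
  also have "\<dots> = \<rho> t" by (simp only: lam_a[OF a t] hh_a[OF t] smult_one_mat')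
  finally show ?thesis .
qed

lemma Ind_iso_imp: assumes a: "a \<in> carrier X" and a': "a' \<in> carrier X"
  and uniq: "\<And>g. g \<in> carrier G \<Longrightarrow> act g a' = a \<Longrightarrow> a' = a"
  and n: "n \<noteq> 0"
  and i: "eq_isomorphic G X act (Ind a n \<rho>) (Ind a' n' \<rho>')"
  shows "a = a' \<and> tw_isomorphic (stabilizer G act a) n \<rho> n' \<rho>'"
proof -
  obtain f f' where F: "eq_morphism G X act f (Ind a n \<rho>) (Ind a' n' \<rho>')"
    "eq_morphism G X act f' (Ind a' n' \<rho>') (Ind a n \<rho>)"
    "\<forall>x\<in>carrier X. f' x * f x = 1\<^sub>m (fst (Ind a n \<rho>) x) \<and> f x * f' x = 1\<^sub>m (fst (Ind a' n' \<rho>') x)"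
    using i unfolding eq_isomorphic_def by iprover
  have ao: "a \<in> orb a" by (rule a_orb[OF a])
  have d: "fst (Ind a n \<rho>) a = n" using ao by (simp add: Ind_fst)
  have fa: "f a \<in> carrier_mat (fst (Ind a' n' \<rho>') a) n" using morph_car[OF F(1) a] unfolding d .
  have f'a: "f' a \<in> carrier_mat n (fst (Ind a' n' \<rho>') a)" using morph_car[OF F(2) a] unfolding d .
  have inv: "f' a * f a = 1\<^sub>m n" "f a * f' a = 1\<^sub>m (fst (Ind a' n' \<rho>') a)"
    using bspec[OF F(3) a] unfolding d by (rule conjunct1, rule conjunct2)
  have ao': "a \<in> orb a'"
  proof (rule ccontr)
    assume "a \<notin> orb a'"
    hence z: "fst (Ind a' n' \<rho>') a = 0" by (simp add: Ind_fst)
    have "n = 0" using zero_inner_id[of "f' a" n "f a"] f'a fa inv(1) unfolding z by blast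
    thus False using n by simp
  qed
  then obtain g where g: "g \<in> carrier G" "act g a' = a" unfolding orb_def by blast
  have aa: "a' = a" by (rule uniq[OF g])
  have d': "fst (Ind a' n' \<rho>') a = n'" using ao' by (simp add: Ind_fst)
  have H: "\<forall>t\<in>stabilizer G act a. f a * \<rho> t = \<rho>' t * f a"
  proof
    fix t assume t: "t \<in> stabilizer G act a"
    have tc: "t \<in> carrier G" "act t a = a" using t stab_iff by auto
    have "f (act t a) * snd (Ind a n \<rho>) t a = snd (Ind a' n' \<rho>') t a * f a" by (rule morph_eq[OF F(1) tc(1) a])
    thus "f a * \<rho> t = \<rho>' t * f a" unfolding tc(2) Ind_snd_stab[OF a t] aa Ind_snd_stab[OF a t] .
  qed
  have "tw_isomorphic (stabilizer G act a) n \<rho> n' \<rho>'" unfolding tw_isomorphic_def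
    by (intro exI[of _ "f a"] exI[of _ "f' a"] conjI fa[unfolded d'] f'a[unfolded d'] inv(1) inv(2)[unfolded d'] H)
  thus ?thesis using aa by simp
qed

end



context ctx begin

lemma key_V: assumes obj: "eq_object G X act \<gamma> V" and a: "a \<in> carrier X" and g: "g \<in> carrier G"
  and xo: "x \<in> orb a"
  shows "snd V g x * snd V (rep a x) a =
     lam a g x \<cdot>\<^sub>m (snd V (rep a (act g x)) a * snd V (hh a g x) a)"
proof -
  have x: "x \<in> carrier X" using xo a orb_sub by auto
  have gxo: "act g x \<in> orb a" using orb_act[OF a g x] xo by simp
  have gx: "act g x \<in> carrier X" using act_cl g x by blast
  note rx = rep_props[OF a xo] and rz = rep_props[OF a gxo]
  have hs: "hh a g x \<in> stabilizer G act a" by (rule hh_stab[OF a g xo])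
  have hc: "hh a g x \<in> carrier G" "act (hh a g x) a = a" using hs stab_iff by auto
  have eq: "rep a (act g x) \<otimes>\<^bsub>G\<^esub> hh a g x = g \<otimes>\<^bsub>G\<^esub> rep a x" by (rule hh_eq[OF a g xo])
  have e1: "snd V (rep a (act g x) \<otimes>\<^bsub>G\<^esub> hh a g x) a =
     \<gamma> (rep a (act g x)) (hh a g x) a \<cdot>\<^sub>m (snd V (rep a (act g x)) a * snd V (hh a g x) a)"
    using obj_mult[OF obj rz(1) hc(1) a] unfolding hc(2) .
  have e2: "snd V (g \<otimes>\<^bsub>G\<^esub> rep a x) a = \<gamma> g (rep a x) a \<cdot>\<^sub>m (snd V g x * snd V (rep a x) a)"
    using obj_mult[OF obj g rx(1) a] unfolding rx(2) .
  have E: "\<gamma> g (rep a x) a \<cdot>\<^sub>m (snd V g x * snd V (rep a x) a) =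
     \<gamma> (rep a (act g x)) (hh a g x) a \<cdot>\<^sub>m (snd V (rep a (act g x)) a * snd V (hh a g x) a)"
    using e1 e2 unfolding eq by simp
  have nz: "\<gamma> g (rep a x) a \<noteq> 0" using gam_nz[OF g rx(1) a] .
  have c1: "1 / \<gamma> g (rep a x) a * \<gamma> g (rep a x) a = 1" using nz by simp
  have c2: "1 / \<gamma> g (rep a x) a * \<gamma> (rep a (act g x)) (hh a g x) a = lam a g x"
    unfolding lam_def by simp
  have "snd V g x * snd V (rep a x) a = (1 / \<gamma> g (rep a x) a * \<gamma> g (rep a x) a) \<cdot>\<^sub>m (snd V g x * snd V (rep a x) a)"
    by (simp only: c1 smult_one_mat')
  also have "\<dots> = (1 / \<gamma> g (rep a x) a) \<cdot>\<^sub>m (\<gamma> g (rep a x) a \<cdot>\<^sub>m (snd V g x * snd V (rep a x) a))"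
    by (simp only: smult_smult_mat')
  also have "\<dots> = (1 / \<gamma> g (rep a x) a) \<cdot>\<^sub>m (\<gamma> (rep a (act g x)) (hh a g x) a \<cdot>\<^sub>m (snd V (rep a (act g x)) a * snd V (hh a g x) a))"
    by (simp only: E)
  also have "\<dots> = lam a g x \<cdot>\<^sub>m (snd V (rep a (act g x)) a * snd V (hh a g x) a)"
    by (simp only: smult_smult_mat' c2)
  finally show ?thesis .
qed

lemma supp_orb: assumes s: "eq_simple G X act \<gamma> V" and a: "a \<in> carrier X"
  and x0: "x0 \<in> orb a" and nz: "fst V x0 \<noteq> 0"
  shows "\<And>x. x \<in> carrier X \<Longrightarrow> x \<notin> orb a \<Longrightarrow> fst V x = 0"
proof -
  have obj: "eq_object G X act \<gamma> V" by (rule simple_obj[OF s])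
  define W :: "'x \<Rightarrow> 'k vec set" where "W x = (if x \<in> orb a then carrier_vec (fst V x) else {0\<^sub>v (fst V x)})" for x
  have sub: "eq_subobject G X act V W" unfolding eq_subobject_def
  proof (intro conjI ballI)
    fix x assume x: "x \<in> carrier X"
    show "lin_subspace (fst V x) (W x)"
      by (cases "x \<in> orb a") (simp_all add: W_def lin_full lin_zero)
  next
    fix g x w assume g: "g \<in> carrier G" and x: "x \<in> carrier X" and w: "w \<in> W x"
    have u: "snd V g x \<in> carrier_mat (fst V (act g x)) (fst V x)" using obj_inv[OF obj g x] by (rule conjunct1)
    show "snd V g x *\<^sub>v w \<in> W (act g x)"
    proof (cases "x \<in> orb a")
      case True
      have gx: "act g x \<in> orb a" using orb_act[OF a g x] True by simp
      have "w \<in> carrier_vec (fst V x)" using w True by (simp add: W_def)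
      hence "snd V g x *\<^sub>v w \<in> carrier_vec (fst V (act g x))" using u by simp
      thus ?thesis using gx by (simp add: W_def)
    next
      case False
      have gx: "act g x \<notin> orb a" using orb_act[OF a g x] False by simp
      have "w = 0\<^sub>v (fst V x)" using w False by (simp add: W_def)
      hence "snd V g x *\<^sub>v w = 0\<^sub>v (fst V (act g x))" using mat_vec_zero'[OF u] by simp
      thus ?thesis using gx by (simp add: W_def)
    qed
  qed
  have x0c: "x0 \<in> carrier X" using x0 a orb_sub by auto
  from simple_sub[OF s sub] show "\<And>x. x \<in> carrier X \<Longrightarrow> x \<notin> orb a \<Longrightarrow> fst V x = 0"
  proof
    assume h: "\<forall>x\<in>carrier X. W x = {0\<^sub>v (fst V x)}"
    have "carrier_vec (fst V x0) = {0\<^sub>v (fst V x0) :: 'k vec}" using bspec[OF h x0c] x0 by (simp add: W_def)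
    hence "fst V x0 = 0" by (rule carrier_vec_single)
    thus "\<And>x. x \<in> carrier X \<Longrightarrow> x \<notin> orb a \<Longrightarrow> fst V x = 0" using nz by simp
  next
    assume h: "\<forall>x\<in>carrier X. W x = carrier_vec (fst V x)"
    fix x assume x: "x \<in> carrier X" and xn: "x \<notin> orb a"
    have "carrier_vec (fst V x) = {0\<^sub>v (fst V x) :: 'k vec}" using bspec[OF h x] xn by (simp add: W_def)
    thus "fst V x = 0" by (rule carrier_vec_single)
  qed
qed

lemma dim_a: assumes obj: "eq_object G X act \<gamma> V" and a: "a \<in> carrier X" and g: "g \<in> carrier G"
  and nz: "fst V (act g a) \<noteq> 0" shows "fst V a \<noteq> 0"
proof
  assume z: "fst V a = 0"
  obtain v where u: "snd V g a \<in> carrier_mat (fst V (act g a)) (fst V a)"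
    and v: "v \<in> carrier_mat (fst V a) (fst V (act g a))" "snd V g a * v = 1\<^sub>m (fst V (act g a))"
    using obj_inv[OF obj g a] by blast
  have "fst V (act g a) = 0" by (rule zero_inner_id[OF u[unfolded z] v(1)[unfolded z] v(2)])
  thus False using nz by simp
qed

lemma restr_one: assumes obj: "eq_object G X act \<gamma> V" and a: "a \<in> carrier X"
  shows "snd V \<one>\<^bsub>G\<^esub> a = 1\<^sub>m (fst V a)"
proof -
  have o: "\<one>\<^bsub>G\<^esub> \<in> carrier G" by simp
  have a1: "act \<one>\<^bsub>G\<^esub> a = a" by (rule act_one[OF a])
  obtain v where u: "snd V \<one>\<^bsub>G\<^esub> a \<in> carrier_mat (fst V a) (fst V a)"
    and v: "v \<in> carrier_mat (fst V a) (fst V a)" "v * snd V \<one>\<^bsub>G\<^esub> a = 1\<^sub>m (fst V a)"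
    using obj_inv[OF obj o a] unfolding a1 by blast
  have "snd V (\<one>\<^bsub>G\<^esub> \<otimes>\<^bsub>G\<^esub> \<one>\<^bsub>G\<^esub>) a = \<gamma> \<one>\<^bsub>G\<^esub> \<one>\<^bsub>G\<^esub> a \<cdot>\<^sub>m (snd V \<one>\<^bsub>G\<^esub> (act \<one>\<^bsub>G\<^esub> a) * snd V \<one>\<^bsub>G\<^esub> a)"
    by (rule obj_mult[OF obj o o a])
  hence idem: "snd V \<one>\<^bsub>G\<^esub> a = snd V \<one>\<^bsub>G\<^esub> a * snd V \<one>\<^bsub>G\<^esub> a"
    by (simp only: a1 G.l_one[OF o] gam_l1[OF o a] smult_one_mat')
  have "snd V \<one>\<^bsub>G\<^esub> a = (v * snd V \<one>\<^bsub>G\<^esub> a) * snd V \<one>\<^bsub>G\<^esub> a"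
    by (simp only: v(2) left_mult_one_mat[OF u])
  also have "\<dots> = v * (snd V \<one>\<^bsub>G\<^esub> a * snd V \<one>\<^bsub>G\<^esub> a)" by (rule assoc_mult_mat[OF v(1) u u])
  also have "\<dots> = 1\<^sub>m (fst V a)" by (simp only: idem[symmetric] v(2))
  finally show ?thesis .
qed

lemma restr_tw: assumes obj: "eq_object G X act \<gamma> V" and a: "a \<in> carrier X"
  shows "tw_module G (stabilizer G act a) (\<lambda>g h. \<gamma> g h a) (fst V a) (\<lambda>t. snd V t a)"
  unfolding tw_module_def
proof (intro conjI ballI)
  fix t assume t: "t \<in> stabilizer G act a"
  have tc: "t \<in> carrier G" "act t a = a" using t stab_iff by auto
  show "snd V t a \<in> carrier_mat (fst V a) (fst V a)"
    using conjunct1[OF obj_inv[OF obj tc(1) a]] unfolding tc(2) .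
next
  fix s t assume s: "s \<in> stabilizer G act a" and t: "t \<in> stabilizer G act a"
  have sc: "s \<in> carrier G" using s stab_iff by auto
  have tc: "t \<in> carrier G" "act t a = a" using t stab_iff by auto
  show "snd V (s \<otimes>\<^bsub>G\<^esub> t) a = \<gamma> s t a \<cdot>\<^sub>m (snd V s a * snd V t a)"
    using obj_mult[OF obj sc tc(1) a] unfolding tc(2) .
next
  show "snd V \<one>\<^bsub>G\<^esub> a = 1\<^sub>m (fst V a)" by (rule restr_one[OF obj a])
qed

end



context ctx begin

lemma restr_irr: assumes s: "eq_simple G X act \<gamma> V" and a: "a \<in> carrier X"
  and n: "fst V a \<noteq> 0"
  shows "tw_irreducible G (stabilizer G act a) (\<lambda>g h. \<gamma> g h a) (fst V a) (\<lambda>t. snd V t a)"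
  unfolding tw_irreducible_def
proof (intro conjI allI impI)
  have obj: "eq_object G X act \<gamma> V" by (rule simple_obj[OF s])
  show "tw_module G (stabilizer G act a) (\<lambda>g h. \<gamma> g h a) (fst V a) (\<lambda>t. snd V t a)"
    by (rule restr_tw[OF obj a])
  show "fst V a \<noteq> 0" by (rule n)
  fix S assume SS: "lin_subspace (fst V a) S \<and> (\<forall>t\<in>stabilizer G act a. \<forall>v\<in>S. snd V t a *\<^sub>v v \<in> S)"
  have ls: "lin_subspace (fst V a) S" using SS by (rule conjunct1)
  have st: "\<And>t v. t \<in> stabilizer G act a \<Longrightarrow> v \<in> S \<Longrightarrow> snd V t a *\<^sub>v v \<in> S" using SS by blast
  have Sc: "S \<subseteq> carrier_vec (fst V a)" and S0: "0\<^sub>v (fst V a) \<in> S"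
    and Sadd: "\<And>v w. v \<in> S \<Longrightarrow> w \<in> S \<Longrightarrow> v + w \<in> S"
    and Ssm: "\<And>c v. v \<in> S \<Longrightarrow> c \<cdot>\<^sub>v v \<in> S"
    using ls unfolding lin_subspace_def by blast+
  define M where "M x = snd V (rep a x) a" for x
  have Mc: "M x \<in> carrier_mat (fst V x) (fst V a)" if xo: "x \<in> orb a" for x
  proof -
    note r = rep_props[OF a xo]
    show ?thesis unfolding M_def using conjunct1[OF obj_inv[OF obj r(1) a]] unfolding r(2) .
  qed
  define W :: "'x \<Rightarrow> 'k vec set" where
    "W x = (if x \<in> orb a then (\<lambda>s. M x *\<^sub>v s) ` S else {0\<^sub>v (fst V x)})" for x
  have sub: "eq_subobject G X act V W" unfolding eq_subobject_def
  proof (intro conjI ballI)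
    fix x assume x: "x \<in> carrier X"
    show "lin_subspace (fst V x) (W x)"
    proof (cases "x \<in> orb a")
      case False thus ?thesis by (simp add: W_def lin_zero)
    next
      case True
      note M = Mc[OF True]
      have WW: "W x = (\<lambda>s. M x *\<^sub>v s) ` S" using True by (simp add: W_def)
      show ?thesis unfolding WW lin_subspace_def
      proof (intro conjI ballI allI)
        show "(\<lambda>s. M x *\<^sub>v s) ` S \<subseteq> carrier_vec (fst V x)" using M Sc by auto
        have "0\<^sub>v (fst V x) = M x *\<^sub>v 0\<^sub>v (fst V a)" by (rule mat_vec_zero'[OF M, symmetric])
        thus "0\<^sub>v (fst V x) \<in> (\<lambda>s. M x *\<^sub>v s) ` S" using S0 by blast
      next
        fix v w assume v: "v \<in> (\<lambda>s. M x *\<^sub>v s) ` S" and w: "w \<in> (\<lambda>s. M x *\<^sub>v s) ` S"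
        obtain s1 where s1: "s1 \<in> S" "v = M x *\<^sub>v s1" using v by blast
        obtain s2 where s2: "s2 \<in> S" "w = M x *\<^sub>v s2" using w by blast
        have "v + w = M x *\<^sub>v (s1 + s2)"
          unfolding s1(2) s2(2) using mult_add_distrib_mat_vec[OF M subsetD[OF Sc s1(1)] subsetD[OF Sc s2(1)]] by (rule sym)
        thus "v + w \<in> (\<lambda>s. M x *\<^sub>v s) ` S" using Sadd[OF s1(1) s2(1)] by blast
      next
        fix c v assume v: "v \<in> (\<lambda>s. M x *\<^sub>v s) ` S"
        obtain s1 where s1: "s1 \<in> S" "v = M x *\<^sub>v s1" using v by blast
        have "c \<cdot>\<^sub>v v = M x *\<^sub>v (c \<cdot>\<^sub>v s1)"
          unfolding s1(2) using mult_mat_vec[OF M subsetD[OF Sc s1(1)], of c] by (rule sym)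
        thus "c \<cdot>\<^sub>v v \<in> (\<lambda>s. M x *\<^sub>v s) ` S" using Ssm[OF s1(1)] by blast
      qed
    qed
  next
    fix g x w assume g: "g \<in> carrier G" and x: "x \<in> carrier X" and w: "w \<in> W x"
    have u: "snd V g x \<in> carrier_mat (fst V (act g x)) (fst V x)" using obj_inv[OF obj g x] by (rule conjunct1)
    show "snd V g x *\<^sub>v w \<in> W (act g x)"
    proof (cases "x \<in> orb a")
      case True
      have gx: "act g x \<in> orb a" using orb_act[OF a g x] True by simp
      obtain s where s: "s \<in> S" "w = M x *\<^sub>v s" using w True by (auto simp: W_def)
      have sc: "s \<in> carrier_vec (fst V a)" using s(1) Sc by blast
      have hs: "hh a g x \<in> stabilizer G act a" by (rule hh_stab[OF a g True])
      have R: "snd V (hh a g x) a \<in> carrier_mat (fst V a) (fst V a)"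
        using tw_car[OF restr_tw[OF obj a] hs] by simp
      have K: "snd V g x * M x = lam a g x \<cdot>\<^sub>m (M (act g x) * snd V (hh a g x) a)"
        unfolding M_def by (rule key_V[OF obj a g True])
      have "snd V g x *\<^sub>v w = (snd V g x * M x) *\<^sub>v s"
        unfolding s(2) by (rule assoc_mult_mat_vec[OF u Mc[OF True] sc, symmetric])
      also have "\<dots> = (lam a g x \<cdot>\<^sub>m (M (act g x) * snd V (hh a g x) a)) *\<^sub>v s" by (simp only: K)
      also have "\<dots> = lam a g x \<cdot>\<^sub>v ((M (act g x) * snd V (hh a g x) a) *\<^sub>v s)"
        by (rule smult_mat_vec'[OF mult_carrier_mat[OF Mc[OF gx] R] sc])
      also have "\<dots> = lam a g x \<cdot>\<^sub>v (M (act g x) *\<^sub>v (snd V (hh a g x) a *\<^sub>v s))"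
        by (simp only: assoc_mult_mat_vec[OF Mc[OF gx] R sc])
      also have "\<dots> = M (act g x) *\<^sub>v (lam a g x \<cdot>\<^sub>v (snd V (hh a g x) a *\<^sub>v s))"
        by (rule mult_mat_vec[OF Mc[OF gx] mult_mat_vec_carrier[OF R sc], symmetric])
      finally have e: "snd V g x *\<^sub>v w = M (act g x) *\<^sub>v (lam a g x \<cdot>\<^sub>v (snd V (hh a g x) a *\<^sub>v s))" .
      have "lam a g x \<cdot>\<^sub>v (snd V (hh a g x) a *\<^sub>v s) \<in> S" by (rule Ssm[OF st[OF hs s(1)]])
      hence "snd V g x *\<^sub>v w \<in> (\<lambda>s. M (act g x) *\<^sub>v s) ` S" unfolding e by blast
      thus ?thesis using gx by (simp add: W_def)
    next
      case False
      have gx: "act g x \<notin> orb a" using orb_act[OF a g x] False by simp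
      have "w = 0\<^sub>v (fst V x)" using w False by (simp add: W_def)
      hence "snd V g x *\<^sub>v w = 0\<^sub>v (fst V (act g x))" using mat_vec_zero'[OF u] by simp
      thus ?thesis using gx by (simp add: W_def)
    qed
  qed
  have ao: "a \<in> orb a" by (rule a_orb[OF a])
  have Ma: "M a = 1\<^sub>m (fst V a)" unfolding M_def rep_a by (rule restr_one[OF obj a])
  have Wa: "W a = S"
  proof -
    have "W a = (\<lambda>s. M a *\<^sub>v s) ` S" using ao by (simp add: W_def)
    also have "\<dots> = (\<lambda>s. s) ` S" unfolding Ma
    proof (rule image_cong[OF refl])
      fix s assume "s \<in> S"
      hence "s \<in> carrier_vec (fst V a)" using Sc by blast
      thus "1\<^sub>m (fst V a) *\<^sub>v s = s" by simp
    qed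
    also have "\<dots> = S" by simp
    finally show ?thesis .
  qed
  from simple_sub[OF s sub] show "S = {0\<^sub>v (fst V a)} \<or> S = carrier_vec (fst V a)"
  proof
    assume "\<forall>x\<in>carrier X. W x = {0\<^sub>v (fst V x)}"
    hence "W a = {0\<^sub>v (fst V a)}" using a by blast
    thus ?thesis unfolding Wa by blast
  next
    assume "\<forall>x\<in>carrier X. W x = carrier_vec (fst V x)"
    hence "W a = carrier_vec (fst V a)" using a by blast
    thus ?thesis unfolding Wa by blast
  qed
qed

end



context ctx begin

lemma restr_iso: assumes obj: "eq_object G X act \<gamma> V" and a: "a \<in> carrier X"
  and supp: "\<And>x. x \<in> carrier X \<Longrightarrow> x \<notin> orb a \<Longrightarrow> fst V x = 0"
  shows "eq_isomorphic G X act (Ind (a) (fst V a) (\<lambda>t. snd V t a)) V"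
proof -
  define n where "n = fst V a"
  define \<rho> where "\<rho> = (\<lambda>t. snd V t a)"
  have tw: "tw_module G (stabilizer G act a) (\<lambda>g h. \<gamma> g h a) n \<rho>"
    unfolding n_def \<rho>_def by (rule restr_tw[OF obj a])
  define M where "M x = snd V (rep a x) a" for x
  have Mc: "M x \<in> carrier_mat (fst V x) n" if xo: "x \<in> orb a" for x
  proof -
    note r = rep_props[OF a xo]
    show ?thesis unfolding M_def n_def using conjunct1[OF obj_inv[OF obj r(1) a]] unfolding r(2) .
  qed
  have Mex: "\<exists>v. v \<in> carrier_mat n (fst V x) \<and> v * M x = 1\<^sub>m n \<and> M x * v = 1\<^sub>m (fst V x)"
    if xo: "x \<in> orb a" for x
  proof -
    note r = rep_props[OF a xo]
    show ?thesis unfolding M_def n_def using conjunct2[OF obj_inv[OF obj r(1) a]] unfolding r(2) .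
  qed
  define f' where "f' x = (if x \<in> orb a then M x else 1\<^sub>m 0)" for x
  define f where "f x = (if x \<in> orb a then (SOME v. v \<in> carrier_mat n (fst V x) \<and> v * M x = 1\<^sub>m n \<and> M x * v = 1\<^sub>m (fst V x)) else 1\<^sub>m 0)" for x
  have oI: "eq_object G X act \<gamma> (Ind a n \<rho>)" by (rule Ind_obj[OF a tw])
  have m: "eq_morphism G X act f' (Ind a n \<rho>) V" unfolding eq_morphism_def
  proof (intro conjI ballI)
    fix x assume x: "x \<in> carrier X"
    show "f' x \<in> carrier_mat (fst V x) (fst (Ind a n \<rho>) x)"
    proof (cases "x \<in> orb a")
      case True thus ?thesis using Mc[OF True] by (simp add: f'_def Ind_fst)
    next
      case False thus ?thesis using supp[OF x False] by (simp add: f'_def Ind_fst)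
    qed
  next
    fix g x assume g: "g \<in> carrier G" and x: "x \<in> carrier X"
    have u: "snd V g x \<in> carrier_mat (fst V (act g x)) (fst V x)" using obj_inv[OF obj g x] by (rule conjunct1)
    show "f' (act g x) * snd (Ind a n \<rho>) g x = snd V g x * f' x"
    proof (cases "x \<in> orb a")
      case True
      have gx: "act g x \<in> orb a" using orb_act[OF a g x] True by simp
      have hs: "hh a g x \<in> stabilizer G act a" by (rule hh_stab[OF a g True])
      have R: "\<rho> (hh a g x) \<in> carrier_mat n n" by (rule tw_car[OF tw hs])
      have K: "snd V g x * M x = lam a g x \<cdot>\<^sub>m (M (act g x) * \<rho> (hh a g x))"
        unfolding M_def \<rho>_def by (rule key_V[OF obj a g True])
      have U: "snd (Ind a n \<rho>) g x = lam a g x \<cdot>\<^sub>m \<rho> (hh a g x)" using True by (simp add: Ind_snd)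
      have "M (act g x) * (lam a g x \<cdot>\<^sub>m \<rho> (hh a g x)) = lam a g x \<cdot>\<^sub>m (M (act g x) * \<rho> (hh a g x))"
        by (rule mult_smult_distrib[OF Mc[OF gx] R])
      also have "\<dots> = snd V g x * M x" by (simp only: K)
      finally show ?thesis by (simp only: f'_def U if_P[OF gx] if_P[OF True])
    next
      case False
      have gx: "act g x \<notin> orb a" using orb_act[OF a g x] False by simp
      have gxc: "act g x \<in> carrier X" using act_cl g x by blast
      have U: "snd (Ind a n \<rho>) g x = 1\<^sub>m 0" using False by (simp add: Ind_snd)
      have u0: "snd V g x \<in> carrier_mat 0 0" using u unfolding supp[OF x False] supp[OF gxc gx] .
      have "(1\<^sub>m 0 :: 'k mat) * 1\<^sub>m 0 = snd V g x * 1\<^sub>m 0"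
        by (rule mat00_eq) (use u0 in simp_all)
      thus ?thesis by (simp only: f'_def U if_not_P[OF gx] if_not_P[OF False])
    qed
  qed
  have fprops: "f x \<in> carrier_mat (fst (Ind a n \<rho>) x) (fst V x) \<and> f x * f' x = 1\<^sub>m (fst (Ind a n \<rho>) x)
      \<and> f' x * f x = 1\<^sub>m (fst V x)" if x: "x \<in> carrier X" for x
  proof (cases "x \<in> orb a")
    case True
    have "f x \<in> carrier_mat n (fst V x) \<and> f x * M x = 1\<^sub>m n \<and> M x * f x = 1\<^sub>m (fst V x)"
      unfolding f_def if_P[OF True] by (rule someI_ex[OF Mex[OF True]])
    thus ?thesis using True by (simp add: f'_def Ind_fst)
  next
    case False
    have z: "fst V x = 0" by (rule supp[OF x False])
    have "(1\<^sub>m 0 :: 'k mat) * 1\<^sub>m 0 = 1\<^sub>m 0" by simp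
    thus ?thesis using False z by (simp add: f_def f'_def Ind_fst)
  qed
  have m': "eq_morphism G X act f V (Ind a n \<rho>)"
    by (rule inv_morph[OF obj oI m]) (use fprops in blast)+
  have I: "\<forall>x\<in>carrier X. f x * f' x = 1\<^sub>m (fst (Ind a n \<rho>) x) \<and> f' x * f x = 1\<^sub>m (fst V x)"
    using fprops by blast
  have "eq_isomorphic G X act (Ind a n \<rho>) V" unfolding eq_isomorphic_def
    by (intro exI[of _ f'] exI[of _ f] conjI m m' I)
  thus ?thesis unfolding n_def \<rho>_def .
qed

lemma surj_simple: assumes s: "eq_simple G X act \<gamma> V" and RX: "R \<subseteq> carrier X"
  and cov: "\<forall>x\<in>carrier X. \<exists>a\<in>R. \<exists>g\<in>carrier G. act g a = x"
  shows "\<exists>a n \<rho>. a \<in> R \<and> tw_irreducible G (stabilizer G act a) (\<lambda>g h. \<gamma> g h a) n \<rho> \<and>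
     eq_isomorphic G X act (Ind a n \<rho>) V"
proof -
  have obj: "eq_object G X act \<gamma> V" by (rule simple_obj[OF s])
  obtain x0 where x0: "x0 \<in> carrier X" "fst V x0 \<noteq> 0" using simple_nz[OF s] by blast
  obtain a g0 where ag: "a \<in> R" "g0 \<in> carrier G" "act g0 a = x0" using cov x0(1) by blast
  have a: "a \<in> carrier X" using ag(1) RX by blast
  have x0o: "x0 \<in> orb a" using ag unfolding orb_def by blast
  have supp: "\<And>x. x \<in> carrier X \<Longrightarrow> x \<notin> orb a \<Longrightarrow> fst V x = 0"
    by (rule supp_orb[OF s a x0o x0(2)])
  have na: "fst V a \<noteq> 0" using dim_a[OF obj a ag(2)] x0(2) ag(3) by simp
  have irr: "tw_irreducible G (stabilizer G act a) (\<lambda>g h. \<gamma> g h a) (fst V a) (\<lambda>t. snd V t a)"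
    by (rule restr_irr[OF s a na])
  have iso: "eq_isomorphic G X act (Ind a (fst V a) (\<lambda>t. snd V t a)) V"
    by (rule restr_iso[OF obj a supp])
  show ?thesis using ag(1) irr iso by blast
qed

end



lemma quot_bij:
  assumes e1: "equiv A r1" and e2: "equiv B r2" and f: "\<And>a. a \<in> A \<Longrightarrow> f a \<in> B"
  and resp: "\<And>x y. x \<in> A \<Longrightarrow> y \<in> A \<Longrightarrow> (f x, f y) \<in> r2 \<longleftrightarrow> (x, y) \<in> r1"
  and sur: "\<And>b. b \<in> B \<Longrightarrow> \<exists>a\<in>A. (f a, b) \<in> r2"
  shows "bij_betw (\<lambda>C. r2 `` (f ` C)) (A//r1) (B//r2)"
proof -
  have r1A: "r1 \<subseteq> A \<times> A" and r1refl: "refl_on A r1" using e1 unfolding equiv_def by auto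
  have r2B: "r2 \<subseteq> B \<times> B" and r2t: "trans r2" using e2 unfolding equiv_def by auto
  have img: "r2 `` (f ` (r1``{a})) = r2``{f a}" if a: "a \<in> A" for a
  proof
    show "r2 `` (f ` (r1``{a})) \<subseteq> r2``{f a}"
    proof
      fix z assume "z \<in> r2 `` (f ` (r1``{a}))"
      then obtain y where y: "(a,y) \<in> r1" "(f y, z) \<in> r2" by blast
      have yA: "y \<in> A" using y(1) r1A by blast
      have "(f a, f y) \<in> r2" using resp[OF a yA] y(1) by simp
      hence "(f a, z) \<in> r2" using y(2) r2t unfolding trans_def by blast
      thus "z \<in> r2``{f a}" by blast
    qed
  next
    have "(a, a) \<in> r1" using r1refl a unfolding refl_on_def by blast
    hence "f a \<in> f ` (r1``{a})" by blast
    thus "r2``{f a} \<subseteq> r2 `` (f ` (r1``{a}))" by blast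
  qed
  show ?thesis unfolding bij_betw_def
  proof
    show "inj_on (\<lambda>C. r2 `` (f ` C)) (A//r1)"
    proof (rule inj_onI)
      fix C1 C2 assume C1: "C1 \<in> A//r1" and C2: "C2 \<in> A//r1" and eq: "r2 `` (f ` C1) = r2 `` (f ` C2)"
      obtain a1 where a1: "C1 = r1``{a1}" "a1 \<in> A" using C1 by (rule quotientE)
      obtain a2 where a2: "C2 = r1``{a2}" "a2 \<in> A" using C2 by (rule quotientE)
      have "r2``{f a1} = r2``{f a2}" using eq unfolding a1(1) a2(1) img[OF a1(2)] img[OF a2(2)] .
      hence "(f a1, f a2) \<in> r2" using eq_equiv_class_iff[OF e2 f[OF a1(2)] f[OF a2(2)]] by simp
      hence "(a1, a2) \<in> r1" using resp[OF a1(2) a2(2)] by simp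
      hence "r1``{a1} = r1``{a2}" using eq_equiv_class_iff[OF e1 a1(2) a2(2)] by simp
      thus "C1 = C2" unfolding a1(1) a2(1) .
    qed
  next
    show "(\<lambda>C. r2 `` (f ` C)) ` (A//r1) = B//r2"
    proof
      show "(\<lambda>C. r2 `` (f ` C)) ` (A//r1) \<subseteq> B//r2"
      proof
        fix D assume "D \<in> (\<lambda>C. r2 `` (f ` C)) ` (A//r1)"
        then obtain C where C: "C \<in> A//r1" "D = r2 `` (f ` C)" by blast
        obtain a where a: "C = r1``{a}" "a \<in> A" using C(1) by (rule quotientE)
        have "D = r2``{f a}" unfolding C(2) a(1) img[OF a(2)] ..
        thus "D \<in> B//r2" using quotientI[OF f[OF a(2)]] by simp
      qed
    next
      show "B//r2 \<subseteq> (\<lambda>C. r2 `` (f ` C)) ` (A//r1)"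
      proof
        fix D assume "D \<in> B//r2"
        then obtain b where b: "D = r2``{b}" "b \<in> B" by (rule quotientE)
        obtain a where a: "a \<in> A" "(f a, b) \<in> r2" using sur[OF b(2)] by blast
        have "r2``{f a} = r2``{b}" using eq_equiv_class_iff[OF e2 f[OF a(1)] b(2)] a(2) by simp
        hence "D = r2 `` (f ` (r1``{a}))" unfolding b(1) img[OF a(1)] by simp
        moreover have "r1``{a} \<in> A//r1" by (rule quotientI[OF a(1)])
        ultimately show "D \<in> (\<lambda>C. r2 `` (f ` C)) ` (A//r1)" by blast
      qed
    qed
  qed
qed

theorem proposition5p5:
  fixes G :: "('g, 'a) monoid_scheme" and X :: "('x, 'b) monoid_scheme"
    and act :: "'g \<Rightarrow> 'x \<Rightarrow> 'x" and bd :: "'x \<Rightarrow> 'g"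
    and \<omega> :: "'x \<Rightarrow> 'x \<Rightarrow> 'x \<Rightarrow> 'k::field_char_0" and \<gamma> :: "'g \<Rightarrow> 'g \<Rightarrow> 'x \<Rightarrow> 'k"
    and \<mu> :: "'g \<Rightarrow> 'x \<Rightarrow> 'x \<Rightarrow> 'k" and c :: "'x \<Rightarrow> 'x \<Rightarrow> 'k"
    and R :: "'x set"
  assumes "alg_closed TYPE('k)"
    and "crossed_module G X act bd"
    and "quasi_abelian_3cocycle G X act bd \<omega> \<gamma> \<mu> c"
    and "normalized_cocycle G X \<omega> \<gamma> \<mu> c"
    and "orbit_representatives G X act R"
  shows "\<exists>F. bij_betw F (simple_classes G X act \<gamma>) (Gamma_classes G act \<gamma> R)"
proof -
  have grp: "group G" using assms(2) unfolding crossed_module_def by (elim conjE)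
  have acth: "\<forall>g\<in>carrier G. act g \<in> hom X X \<and> bij_betw (act g) (carrier X) (carrier X)"
    using assms(2) unfolding crossed_module_def by (elim conjE)
  have act1: "\<forall>x\<in>carrier X. act \<one>\<^bsub>G\<^esub> x = x"
    using assms(2) unfolding crossed_module_def by (elim conjE)
  have actm: "\<forall>g\<in>carrier G. \<forall>h\<in>carrier G. \<forall>x\<in>carrier X. act (g \<otimes>\<^bsub>G\<^esub> h) x = act g (act h x)"
    using assms(2) unfolding crossed_module_def by (elim conjE)
  have gnz: "\<forall>g\<in>carrier G. \<forall>h\<in>carrier G. \<forall>x\<in>carrier X. \<gamma> g h x \<noteq> 0"
    using assms(3) unfolding quasi_abelian_3cocycle_def Let_def by (elim conjE)
  have gcoc: "\<forall>g\<in>carrier G. \<forall>h\<in>carrier G. \<forall>k\<in>carrier G. \<forall>x\<in>carrier X.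
      \<gamma> h k x * \<gamma> g (h \<otimes>\<^bsub>G\<^esub> k) x = \<gamma> (g \<otimes>\<^bsub>G\<^esub> h) k x * \<gamma> g h (act k x)"
    using assms(3) unfolding quasi_abelian_3cocycle_def Let_def by (elim conjE)
  have gnorm: "\<forall>g\<in>carrier G. \<forall>h\<in>carrier G. \<forall>x\<in>carrier X.
      (g = \<one>\<^bsub>G\<^esub> \<or> h = \<one>\<^bsub>G\<^esub> \<or> x = \<one>\<^bsub>X\<^esub>) \<longrightarrow> \<gamma> g h x = 1"
    using assms(4) unfolding normalized_cocycle_def by (elim conjE)
  have RX: "R \<subseteq> carrier X"
    using assms(5) unfolding orbit_representatives_def by (elim conjE)
  have cov: "\<forall>x\<in>carrier X. \<exists>a\<in>R. \<exists>g\<in>carrier G. act g a = x"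
    using assms(5) unfolding orbit_representatives_def by (elim conjE)
  have runiq: "\<forall>a\<in>R. \<forall>b\<in>R. (\<exists>g\<in>carrier G. act g a = b) \<longrightarrow> a = b"
    using assms(5) unfolding orbit_representatives_def by (elim conjE)
  have ctxI: "ctx G X act \<gamma>" unfolding ctx_def ctx_axioms_def
  proof (intro conjI allI impI grp)
    fix g x assume g: "g \<in> carrier G" and x: "x \<in> carrier X"
    have "act g \<in> hom X X" using bspec[OF acth g] by (rule conjunct1)
    thus "act g x \<in> carrier X" using x by (rule hom_in_carrier)
  next
    fix x assume x: "x \<in> carrier X" show "act \<one>\<^bsub>G\<^esub> x = x" by (rule bspec[OF act1 x])
  next
    fix g h x assume g: "g \<in> carrier G" and h: "h \<in> carrier G" and x: "x \<in> carrier X"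
    show "act (g \<otimes>\<^bsub>G\<^esub> h) x = act g (act h x)" by (rule bspec[OF bspec[OF bspec[OF actm g] h] x])
  next
    fix g h x assume g: "g \<in> carrier G" and h: "h \<in> carrier G" and x: "x \<in> carrier X"
    show "\<gamma> g h x \<noteq> 0" by (rule bspec[OF bspec[OF bspec[OF gnz g] h] x])
  next
    fix g h k x assume g: "g \<in> carrier G" and h: "h \<in> carrier G" and k: "k \<in> carrier G" and x: "x \<in> carrier X"
    show "\<gamma> h k x * \<gamma> g (h \<otimes>\<^bsub>G\<^esub> k) x = \<gamma> (g \<otimes>\<^bsub>G\<^esub> h) k x * \<gamma> g h (act k x)"
      by (rule bspec[OF bspec[OF bspec[OF bspec[OF gcoc g] h] k] x])
  next
    fix h x assume h: "h \<in> carrier G" and x: "x \<in> carrier X"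
    have o: "\<one>\<^bsub>G\<^esub> \<in> carrier G" by (rule monoid.one_closed[OF group.is_monoid[OF grp]])
    show "\<gamma> \<one>\<^bsub>G\<^esub> h x = 1" using bspec[OF bspec[OF bspec[OF gnorm o] h] x] by simp
  next
    fix g x assume g: "g \<in> carrier G" and x: "x \<in> carrier X"
    have o: "\<one>\<^bsub>G\<^esub> \<in> carrier G" by (rule monoid.one_closed[OF group.is_monoid[OF grp]])
    show "\<gamma> g \<one>\<^bsub>G\<^esub> x = 1" using bspec[OF bspec[OF bspec[OF gnorm g] o] x] by simp
  qed
  interpret C: ctx G X act \<gamma> by (rule ctxI)
  define S where "S = {V. eq_simple G X act \<gamma> V}"
  define rS where "rS = {(V, W). eq_simple G X act \<gamma> V \<and> eq_simple G X act \<gamma> W \<and> eq_isomorphic G X act V W}"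
  define Gm where "Gm = Gamma_set G act \<gamma> R"
  define rG where "rG = {((a, n, \<rho>), (a', n', \<rho>')).
        (a, n, \<rho>) \<in> Gamma_set G act \<gamma> R \<and> (a', n', \<rho>') \<in> Gamma_set G act \<gamma> R \<and>
        a = a' \<and> tw_isomorphic (stabilizer G act a) n \<rho> n' \<rho>'}"
  have GmI: "(a, n, \<rho>) \<in> Gm \<longleftrightarrow> a \<in> R \<and> tw_irreducible G (stabilizer G act a) (\<lambda>g h. \<gamma> g h a) n \<rho>" for a n \<rho>
    unfolding Gm_def Gamma_set_def by simp
  have rGI: "((a, n, \<rho>), (a', n', \<rho>')) \<in> rG \<longleftrightarrow> (a, n, \<rho>) \<in> Gm \<and> (a', n', \<rho>') \<in> Gm \<and>
        a = a' \<and> tw_isomorphic (stabilizer G act a) n \<rho> n' \<rho>'" for a n \<rho> a' n' \<rho>'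
    unfolding rG_def Gm_def by simp
  have twof: "tw_module G (stabilizer G act a) (\<lambda>g h. \<gamma> g h a) n \<rho>" if "(a, n, \<rho>) \<in> Gm" for a n \<rho>
    using that unfolding GmI tw_irreducible_def by (elim conjE)
  have eqS: "equiv S rS"
  proof (rule equivI)
    show "rS \<subseteq> S \<times> S" unfolding rS_def S_def by blast
    show "refl_on S rS" unfolding refl_on_def rS_def S_def
      using C.iso_refl simple_obj by blast
    show "sym rS" unfolding sym_def rS_def using C.iso_sym by blast
    show "trans rS" unfolding trans_def rS_def
    proof (intro allI impI)
      fix x y z assume "(x, y) \<in> {(V, W). eq_simple G X act \<gamma> V \<and> eq_simple G X act \<gamma> W \<and> eq_isomorphic G X act V W}"
        "(y, z) \<in> {(V, W). eq_simple G X act \<gamma> V \<and> eq_simple G X act \<gamma> W \<and> eq_isomorphic G X act V W}"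
      hence h: "eq_simple G X act \<gamma> x" "eq_simple G X act \<gamma> y" "eq_simple G X act \<gamma> z"
        "eq_isomorphic G X act x y" "eq_isomorphic G X act y z" by auto
      have "eq_isomorphic G X act x z"
        by (rule C.iso_trans[OF simple_obj[OF h(1)] simple_obj[OF h(2)] simple_obj[OF h(3)] h(4) h(5)])
      thus "(x, z) \<in> {(V, W). eq_simple G X act \<gamma> V \<and> eq_simple G X act \<gamma> W \<and> eq_isomorphic G X act V W}"
        using h by auto
    qed
  qed
  have eqG: "equiv Gm rG"
  proof (rule equivI)
    show "rG \<subseteq> Gm \<times> Gm"
    proof
      fix pq assume pqr: "pq \<in> rG"
      obtain p q where pqe: "pq = (p, q)" by (cases pq)
      obtain a n \<rho> where pe: "p = (a, n, \<rho>)" by (rule prod_cases3)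
      obtain a' n' \<rho>' where qe: "q = (a', n', \<rho>')" by (rule prod_cases3)
      have "((a, n, \<rho>), (a', n', \<rho>')) \<in> rG" using pqr unfolding pqe pe qe .
      thus "pq \<in> Gm \<times> Gm" unfolding pqe pe qe rGI by blast
    qed
    show "refl_on Gm rG" unfolding refl_on_def
    proof
      fix p assume p: "p \<in> Gm"
      obtain a n \<rho> where pe: "p = (a, n, \<rho>)" by (rule prod_cases3)
      have "tw_isomorphic (stabilizer G act a) n \<rho> n \<rho>" by (rule tw_iso_refl[OF twof[OF p[unfolded pe]]])
      thus "(p, p) \<in> rG" using p unfolding pe rGI by simp
    qed
    show "sym rG" unfolding sym_def
    proof (intro allI impI)
      fix p q assume pq: "(p, q) \<in> rG"
      obtain a n \<rho> where pe: "p = (a, n, \<rho>)" by (rule prod_cases3)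
      obtain a' n' \<rho>' where qe: "q = (a', n', \<rho>')" by (rule prod_cases3)
      have h: "(a, n, \<rho>) \<in> Gm" "(a', n', \<rho>') \<in> Gm" "a = a'" "tw_isomorphic (stabilizer G act a) n \<rho> n' \<rho>'"
        using pq unfolding pe qe rGI by blast+
      have "tw_isomorphic (stabilizer G act a') n' \<rho>' n \<rho>"
        using tw_iso_sym[OF twof[OF h(1)] twof[OF h(2)[folded h(3)]] h(4)] h(3) by simp
      thus "(q, p) \<in> rG" unfolding pe qe rGI using h by simp
    qed
    show "trans rG" unfolding trans_def
    proof (intro allI impI)
      fix p q r assume pq: "(p, q) \<in> rG" and qr: "(q, r) \<in> rG"
      obtain a n \<rho> where pe: "p = (a, n, \<rho>)" by (rule prod_cases3)
      obtain a' n' \<rho>' where qe: "q = (a', n', \<rho>')" by (rule prod_cases3)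
      obtain a'' n'' \<rho>'' where re: "r = (a'', n'', \<rho>'')" by (rule prod_cases3)
      have h: "(a, n, \<rho>) \<in> Gm" "(a', n', \<rho>') \<in> Gm" "a = a'" "tw_isomorphic (stabilizer G act a) n \<rho> n' \<rho>'"
        using pq unfolding pe qe rGI by blast+
      have h': "(a'', n'', \<rho>'') \<in> Gm" "a' = a''" "tw_isomorphic (stabilizer G act a') n' \<rho>' n'' \<rho>''"
        using qr unfolding qe re rGI by blast+
      have "tw_isomorphic (stabilizer G act a) n \<rho> n'' \<rho>''"
        using tw_iso_trans[OF twof[OF h(1)] twof[OF h(2)[folded h(3)]] twof[OF h'(1)[folded h'(2) h(3)]] h(4)]
          h'(3) h(3) by simp
      thus "(p, r) \<in> rG" unfolding pe re rGI using h h' by simp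
    qed
  qed
  define f where "f p = C.Ind (fst p) (fst (snd p)) (snd (snd p))" for p
  have fS: "f p \<in> S" if p: "p \<in> Gm" for p
  proof -
    obtain a n \<rho> where pe: "p = (a, n, \<rho>)" by (rule prod_cases3)
    have h: "a \<in> R" "tw_irreducible G (stabilizer G act a) (\<lambda>g h. \<gamma> g h a) n \<rho>" using p unfolding pe GmI by auto
    have "a \<in> carrier X" using h(1) RX by blast
    thus ?thesis unfolding S_def f_def pe using C.Ind_simple h(2) by simp
  qed
  have resp: "(f p, f q) \<in> rS \<longleftrightarrow> (p, q) \<in> rG" if p: "p \<in> Gm" and q: "q \<in> Gm" for p q
  proof -
    obtain a n \<rho> where pe: "p = (a, n, \<rho>)" by (rule prod_cases3)
    obtain a' n' \<rho>' where qe: "q = (a', n', \<rho>')" by (rule prod_cases3)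
    have h: "a \<in> R" "tw_irreducible G (stabilizer G act a) (\<lambda>g h. \<gamma> g h a) n \<rho>" using p unfolding pe GmI by auto
    have h': "a' \<in> R" "tw_irreducible G (stabilizer G act a') (\<lambda>g h. \<gamma> g h a') n' \<rho>'" using q unfolding qe GmI by auto
    have a: "a \<in> carrier X" and a': "a' \<in> carrier X" using h(1) h'(1) RX by auto
    have n: "n \<noteq> 0" using h(2) unfolding tw_irreducible_def by (elim conjE)
    have sp: "f p \<in> S" "f q \<in> S" using fS p q by auto
    have "(f p, f q) \<in> rS \<longleftrightarrow> eq_isomorphic G X act (C.Ind a n \<rho>) (C.Ind a' n' \<rho>')"
      using sp unfolding rS_def S_def f_def pe qe by simp
    also have "\<dots> \<longleftrightarrow> a = a' \<and> tw_isomorphic (stabilizer G act a) n \<rho> n' \<rho>'"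
    proof
      assume i: "eq_isomorphic G X act (C.Ind a n \<rho>) (C.Ind a' n' \<rho>')"
      have uniq: "\<And>g. g \<in> carrier G \<Longrightarrow> act g a' = a \<Longrightarrow> a' = a" using runiq h(1) h'(1) by blast
      show "a = a' \<and> tw_isomorphic (stabilizer G act a) n \<rho> n' \<rho>'"
        by (rule C.Ind_iso_imp[OF a a' uniq n i])
    next
      assume i: "a = a' \<and> tw_isomorphic (stabilizer G act a) n \<rho> n' \<rho>'"
      have tw: "tw_module G (stabilizer G act a) (\<lambda>g h. \<gamma> g h a) n \<rho>" using twof p unfolding pe by blast
      have tw': "tw_module G (stabilizer G act a) (\<lambda>g h. \<gamma> g h a) n' \<rho>'" using twof q i unfolding qe by blast
      have "eq_isomorphic G X act (C.Ind a n \<rho>) (C.Ind a n' \<rho>')"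
        using C.Ind_iso_rev[OF a tw tw'] i by blast
      thus "eq_isomorphic G X act (C.Ind a n \<rho>) (C.Ind a' n' \<rho>')" using i by simp
    qed
    also have "\<dots> \<longleftrightarrow> (p, q) \<in> rG" unfolding pe qe rGI using p q unfolding pe qe by simp
    finally show ?thesis .
  qed
  have sur: "\<exists>p\<in>Gm. (f p, V) \<in> rS" if V: "V \<in> S" for V
  proof -
    have s: "eq_simple G X act \<gamma> V" using V unfolding S_def by simp
    obtain a n \<rho> where h: "a \<in> R" "tw_irreducible G (stabilizer G act a) (\<lambda>g h. \<gamma> g h a) n \<rho>"
      "eq_isomorphic G X act (C.Ind a n \<rho>) V"
      using C.surj_simple[OF s RX cov] by blast
    have p: "(a, n, \<rho>) \<in> Gm" unfolding GmI using h by simp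
    have "f (a, n, \<rho>) \<in> S" by (rule fS[OF p])
    hence "(f (a, n, \<rho>), V) \<in> rS" unfolding rS_def S_def f_def using s h(3) by simp
    thus ?thesis using p by blast
  qed
  have "bij_betw (\<lambda>C. rS `` (f ` C)) (Gm//rG) (S//rS)"
    by (rule quot_bij[OF eqG eqS fS resp sur])
  from bij_betw_inv[OF this] obtain F where "bij_betw F (S//rS) (Gm//rG)" by blast
  moreover have "simple_classes G X act \<gamma> = S//rS" unfolding simple_classes_def S_def rS_def ..
  moreover have "Gamma_classes G act \<gamma> R = Gm//rG" unfolding Gamma_classes_def Gm_def rG_def ..
  ultimately show ?thesis by auto
qed



end
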